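(* Let $\lambda,\mu\in\Lambda$ and $g,h\in W$, and put $A=\kappa(\lambda,g,\mu)$, $B=\kappa(\lambda,h,\mu)$. If $h\le g$ in the Bruhat order, then $B\le_{\mathrm{alg}}A$.
   Context: Fix integers $r\ge0$, $d\ge2$, $n=2r+2$, $D=2d+2$. $W$ is the group of bijections $g:\mathbb{Z}\to\mathbb{Z}$ with $g(i+D)=g(i)+D$, $g(-i)=-g(i)$, a Coxeter group of type $\widetilde C_d$ with simple reflections $s_0,\dots,s_d$ where (elements determined by values on $1,\dots,d$) $s_0(1)=-1$, $s_0(k)=k$ ($k\ge2$); $s_d(d)=d+2$, $s_d(k)=k$ ($k<d$); $s_i$ ($1\le i\le d-1$) swaps $i,i+1$; $\le$ is its Bruhat order. $\Lambda$ is the set of $\lambda=(\lambda_0,\dots,\lambda_{r+1})\in\mathbb{N}^{r+2}$ with sum $d$, $\lambda_{0,i}=\lambda_0+\dots+\lambda_i$; $R_0^\lambda=[-\lambda_0..\lambda_0]$, $R_i^\lambda=(\lambda_{0,i-1}..\lambda_{0,i}]$ ($1\le i\le r$), $R^\lambda_{r+1}=[d+1-\lambda_{r+1}..d+1+\lambda_{r+1}]$, extended by $R^\lambda_{-i}=-R^\lambda_i$, $R^\lambda_{i+n}=R^\lambda_i+D$. $\kappa(\lambda,g,\mu)=(|R_i^\lambda\cap g(R_j^\mu)|)_{i,j\in\mathbb{Z}}$. For such a matrix $A=(a_{ij})$ (with $a_{00},a_{r+1,r+1}$ odd) set $a'_{ii}=(a_{ii}-1)/2$ for $i\in\{0,r+1\}$,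 $\mathrm{row}_{\mathfrak c}(A)=(a'_{00}+\sum_{j\ge1}a_{0j},\ \sum_ja_{1j},\dots,\sum_ja_{rj},\ a'_{r+1,r+1}+\sum_{j\le r}a_{r+1,j})$ and $\mathrm{col}_{\mathfrak c}(A)$ analogously with columns, and $\sigma_{ij}(A)=\sum_{x\le i,\ y\ge j}a_{xy}$. Write $A\le_{\mathrm{alg}}B$ iff $\mathrm{row}_{\mathfrak c}(A)=\mathrm{row}_{\mathfrak c}(B)$, $\mathrm{col}_{\mathfrak c}(A)=\mathrm{col}_{\mathfrak c}(B)$ and $\sigma_{ij}(A)\le\sigma_{ij}(B)$ for all $i<j$. *)

theory Defs
  imports Main
begin

section \<open>The group W of type affine C_d\<close>

definition DD :: "nat \<Rightarrow> int" where "DD d = 2 * int d + 2"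

definition Wgrp :: "nat \<Rightarrow> (int \<Rightarrow> int) set" where
  "Wgrp d = {g. bij g \<and> (\<forall>i. g (i + DD d) = g i + DD d) \<and> (\<forall>i. g (- i) = - g i)}"

text \<open>Value of the simple reflection s_k on a residue m in [0, D).\<close>
definition sres :: "nat \<Rightarrow> nat \<Rightarrow> int \<Rightarrow> int" where
  "sres d k m =
    (let D = DD d; kk = int k in
     if k = 0 then (if m = 1 then -1 else if m = D - 1 then D + 1 else m)
     else if k = d then (if m = int d then int d + 2 else if m = int d + 2 then int d else m)
     else if k < d then
       (if m = kk then kk + 1 else if m = kk + 1 then kk
        else if m = D - kk then D - kk - 1 else if m = D - kk - 1 then D - kk else m)
     else m)"

definition sref :: "nat \<Rightarrow> nat \<Rightarrow> int \<Rightarrow> int" where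
  "sref d k i = DD d * (i div DD d) + sres d k (i mod DD d)"

definition wlen :: "nat \<Rightarrow> (int \<Rightarrow> int) \<Rightarrow> nat" where
  "wlen d g = (LEAST n. \<exists>ws. length ws = n \<and> set ws \<subseteq> {0..d} \<and>
                         foldr (\<lambda>k f. sref d k \<circ> f) ws id = g)"

definition reflections :: "nat \<Rightarrow> (int \<Rightarrow> int) set" where
  "reflections d = {w \<circ> sref d k \<circ> inv w | w k. w \<in> Wgrp d \<and> k \<le> d}"

definition bruhat_step :: "nat \<Rightarrow> ((int \<Rightarrow> int) \<times> (int \<Rightarrow> int)) set" where
  "bruhat_step d = {(x, x \<circ> t) | x t. x \<in> Wgrp d \<and> t \<in> reflections d \<and> wlen d x < wlen d (x \<circ> t)}"

definition bruhat_le :: "nat \<Rightarrow> (int \<Rightarrow> int) \<Rightarrow> (int \<Rightarrow> int) \<Rightarrow> bool" where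
  "bruhat_le d h g \<longleftrightarrow> h \<in> Wgrp d \<and> g \<in> Wgrp d \<and> (h, g) \<in> (bruhat_step d)\<^sup>*"

text \<open>lambda = (lambda_0, ..., lambda_{r+1}) as a list of length r+2.\<close>
definition Lambda :: "nat \<Rightarrow> nat \<Rightarrow> nat list set" where
  "Lambda r d = {l. length l = r + 2 \<and> sum_list l = d}"

definition lam0 :: "nat list \<Rightarrow> nat \<Rightarrow> int" where
  "lam0 l i = int (sum_list (take (Suc i) l))"

definition Rbase :: "nat \<Rightarrow> nat \<Rightarrow> nat list \<Rightarrow> nat \<Rightarrow> int set" where
  "Rbase r d l j =
    (if j = 0 then {- int (l ! 0) .. int (l ! 0)}
     else if j \<le> r then {lam0 l (j - 1) + 1 .. lam0 l j}
     else {int d + 1 - int (l ! (r + 1)) .. int d + 1 + int (l ! (r + 1))})"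

text \<open>R_i for all integers i, via R_{-i} = -R_i and R_{i+n} = R_i + D, n = 2r+2.\<close>
definition Rset :: "nat \<Rightarrow> nat \<Rightarrow> nat list \<Rightarrow> int \<Rightarrow> int set" where
  "Rset r d l i =
    (let n = 2 * int r + 2; q = i div n; m = i mod n in
     if m \<le> int r + 1 then (\<lambda>x. x + q * DD d) ` Rbase r d l (nat m)
     else (\<lambda>x. (q + 1) * DD d - x) ` Rbase r d l (nat (n - m)))"

definition kappa :: "nat \<Rightarrow> nat \<Rightarrow> nat list \<Rightarrow> (int \<Rightarrow> int) \<Rightarrow> nat list \<Rightarrow> int \<Rightarrow> int \<Rightarrow> int" where
  "kappa r d l g m i j = int (card (Rset r d l i \<inter> g ` Rset r d m j))"

definition fsum :: "('a \<Rightarrow> int) \<Rightarrow> 'a set \<Rightarrow> int" where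
  "fsum f S = sum f {x \<in> S. f x \<noteq> 0}"

definition rowc :: "nat \<Rightarrow> (int \<Rightarrow> int \<Rightarrow> int) \<Rightarrow> int list" where
  "rowc r A = map (\<lambda>i.
      if i = 0 then (A 0 0 - 1) div 2 + fsum (\<lambda>j. A 0 j) {1..}
      else if i \<le> r then fsum (\<lambda>j. A (int i) j) UNIV
      else (A (int r + 1) (int r + 1) - 1) div 2 + fsum (\<lambda>j. A (int r + 1) j) {..int r})
    [0..<r + 2]"

definition colc :: "nat \<Rightarrow> (int \<Rightarrow> int \<Rightarrow> int) \<Rightarrow> int list" where
  "colc r A = map (\<lambda>j.
      if j = 0 then (A 0 0 - 1) div 2 + fsum (\<lambda>i. A i 0) {1..}
      else if j \<le> r then fsum (\<lambda>i. A i (int j)) UNIV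
      else (A (int r + 1) (int r + 1) - 1) div 2 + fsum (\<lambda>i. A i (int r + 1)) {..int r})
    [0..<r + 2]"

definition sigma :: "(int \<Rightarrow> int \<Rightarrow> int) \<Rightarrow> int \<Rightarrow> int \<Rightarrow> int" where
  "sigma A i j = fsum (\<lambda>(x, y). A x y) {(x, y). x \<le> i \<and> j \<le> y}"

definition alg_le :: "nat \<Rightarrow> (int \<Rightarrow> int \<Rightarrow> int) \<Rightarrow> (int \<Rightarrow> int \<Rightarrow> int) \<Rightarrow> bool" where
  "alg_le r A B \<longleftrightarrow> rowc r A = rowc r B \<and> colc r A = colc r B \<and>
     (\<forall>i j. i < j \<longrightarrow> sigma A i j \<le> sigma B i j)"

end

theory Submission
  imports Defs
begin


lemma DD_pos: "DD d > 0" by (simp add: DD_def)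

lemma W_bij: "g \<in> Wgrp d \<Longrightarrow> bij g" by (simp add: Wgrp_def)
lemma W_inj: "g \<in> Wgrp d \<Longrightarrow> inj g" by (simp add: Wgrp_def bij_def)
lemma W_per: "g \<in> Wgrp d \<Longrightarrow> g (i + DD d) = g i + DD d" by (simp add: Wgrp_def)
lemma W_odd: "g \<in> Wgrp d \<Longrightarrow> g (- i) = - g i" by (simp add: Wgrp_def)

lemma W_perm: assumes "g \<in> Wgrp d" shows "g (i + m * DD d) = g i + m * DD d"
proof (induction m rule: int_induct[where k=0])
  case base then show ?case by simp
next
  case (step1 m)
  have "g (i + (m+1) * DD d) = g ((i + m * DD d) + DD d)" by (simp add: algebra_simps)
  also have "\<dots> = g (i + m * DD d) + DD d" using W_per[OF assms] by simp
  also have "\<dots> = g i + (m+1) * DD d" using step1 by (simp add: algebra_simps)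
  finally show ?case .
next
  case (step2 m)
  have "g (i + m * DD d) = g ((i + (m - 1) * DD d) + DD d)" by (simp add: algebra_simps)
  also have "\<dots> = g (i + (m - 1) * DD d) + DD d" using W_per[OF assms] by simp
  finally show ?case using step2 by (simp add: algebra_simps)
qed

lemma W_zero: "g \<in> Wgrp d \<Longrightarrow> g 0 = 0"
  using W_odd[of g d 0] by simp

lemma W_refl: assumes "g \<in> Wgrp d" shows "g (DD d - i) = DD d - g i"
  using W_per[OF assms, of "-i"] W_odd[OF assms, of i] by simp

lemma W_comp: "g \<in> Wgrp d \<Longrightarrow> h \<in> Wgrp d \<Longrightarrow> g \<circ> h \<in> Wgrp d"
  by (simp add: Wgrp_def bij_comp)

lemma W_id: "id \<in> Wgrp d" by (simp add: Wgrp_def)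

lemma W_inv: assumes "g \<in> Wgrp d" shows "inv g \<in> Wgrp d"
proof -
  have b: "bij g" using assms by (simp add: Wgrp_def)
  have ginv: "g (inv g x) = x" for x using b by (simp add: bij_def surj_f_inv_f)
  have ig: "inv g (g x) = x" for x using b by (simp add: bij_def inv_f_f)
  have "inv g (i + DD d) = inv g i + DD d" for i
  proof -
    have "g (inv g i + DD d) = i + DD d" using W_per[OF assms] ginv by simp
    then show ?thesis using ig by metis
  qed
  moreover have "inv g (- i) = - inv g i" for i
  proof -
    have "g (- inv g i) = - i" using W_odd[OF assms] ginv by simp
    then show ?thesis using ig by metis
  qed
  ultimately show ?thesis using b by (simp add: Wgrp_def bij_imp_bij_inv)
qed

lemma W_inv_l: "g \<in> Wgrp d \<Longrightarrow> inv g (g x) = x"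
  by (simp add: W_inj inv_f_f)
lemma W_inv_r: "g \<in> Wgrp d \<Longrightarrow> g (inv g x) = x"
  using W_bij by (simp add: bij_def surj_f_inv_f) 

definition cg :: "nat \<Rightarrow> int \<Rightarrow> int \<Rightarrow> bool" where
  "cg d x y \<longleftrightarrow> DD d dvd (x - y)"

lemma cg_refl[simp]: "cg d x x" by (simp add: cg_def)
lemma cg_sym: "cg d x y \<Longrightarrow> cg d y x"
  unfolding cg_def by (metis dvd_minus_iff minus_diff_eq)
lemma cg_trans: "cg d x y \<Longrightarrow> cg d y z \<Longrightarrow> cg d x z"
  unfolding cg_def by (metis diff_add_cancel dvd_add add_diff_eq)
lemma cg_neg: "cg d x y \<Longrightarrow> cg d (-x) (-y)"
  unfolding cg_def by (metis dvd_minus_iff minus_diff_eq diff_minus_eq_add uminus_add_conv_diff add.commute)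
lemma cg_neg_iff: "cg d (-x) (-y) \<longleftrightarrow> cg d x y"
  using cg_neg by fastforce
lemma cg_add: "cg d x y \<Longrightarrow> cg d (x + c) (y + c)"
  unfolding cg_def by simp
lemma cg_add_iff: "cg d (x + c) (y + c) \<longleftrightarrow> cg d x y"
  unfolding cg_def by simp
lemma cg_ex: "cg d x y \<Longrightarrow> \<exists>m. x = y + m * DD d"
  unfolding cg_def by (metis dvd_def mult.commute add_diff_cancel_left' diff_add_cancel add.commute)
lemma cg_mult: "cg d (y + m * DD d) y" unfolding cg_def by simp

lemma W_cg: assumes "g \<in> Wgrp d" shows "cg d (g x) (g y) \<longleftrightarrow> cg d x y"
proof
  assume "cg d x y"
  then obtain m where "x = y + m * DD d" using cg_ex by blast
  then show "cg d (g x) (g y)" using W_perm[OF assms] cg_mult by simp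
next
  assume "cg d (g x) (g y)"
  then obtain m where "g x = g y + m * DD d" using cg_ex by blast
  then have "g x = g (y + m * DD d)" using W_perm[OF assms] by simp
  then have "x = y + m * DD d" using W_inj[OF assms] by (simp add: inj_eq)
  then show "cg d x y" using cg_mult by simp
qed



definition tau :: "nat \<Rightarrow> int \<Rightarrow> int \<Rightarrow> int \<Rightarrow> int" where
  "tau d p q z = (if cg d z p \<or> cg d z (-q) then z + (q - p)
                  else if cg d z q \<or> cg d z (-p) then z + (p - q) else z)"

definition valid :: "nat \<Rightarrow> int \<Rightarrow> int \<Rightarrow> bool" where
  "valid d p q \<longleftrightarrow> \<not> cg d p (-p) \<and> \<not> cg d q (-q) \<and> \<not> cg d p q"

lemma cg_shift: "cg d (z + c) y \<longleftrightarrow> cg d z (y - c)"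
  unfolding cg_def by (simp add: algebra_simps)

lemma cg_sym_iff: "cg d x y \<longleftrightarrow> cg d y x" using cg_sym by blast

lemma tau_g1: "cg d z p \<or> cg d z (-q) \<Longrightarrow> tau d p q z = z + (q - p)"
  by (simp add: tau_def)
lemma tau_g2: "\<not>(cg d z p \<or> cg d z (-q)) \<Longrightarrow> cg d z q \<or> cg d z (-p) \<Longrightarrow> tau d p q z = z + (p - q)"
  by (simp add: tau_def)
lemma tau_g3: "\<not>(cg d z p \<or> cg d z (-q)) \<Longrightarrow> \<not>(cg d z q \<or> cg d z (-p)) \<Longrightarrow> tau d p q z = z"
  by (simp add: tau_def)

lemma valid_sym: "valid d p q \<Longrightarrow> valid d q p"
  unfolding valid_def using cg_sym by blast

lemma valid_groups:
  assumes "valid d p q"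
  shows "\<not> ((cg d z p \<or> cg d z (-q)) \<and> (cg d z q \<or> cg d z (-p)))"
proof
  assume h: "(cg d z p \<or> cg d z (-q)) \<and> (cg d z q \<or> cg d z (-p))"
  have v: "\<not> cg d p (-p)" "\<not> cg d q (-q)" "\<not> cg d p q" using assms by (auto simp: valid_def)
  have v2: "\<not> cg d (-p) (-q)" using v(3) cg_neg_iff by blast
  from h show False
    using v v2 cg_sym cg_trans by metis
qed

lemma tau_g2': "valid d p q \<Longrightarrow> cg d z q \<or> cg d z (-p) \<Longrightarrow> tau d p q z = z + (p - q)"
  using valid_groups tau_g2 by blast

lemma tau_swap: assumes "valid d p q" shows "tau d q p = tau d p q"
proof
  fix z
  show "tau d q p z = tau d p q z"
  proof (cases "cg d z p \<or> cg d z (-q)")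
    case True
    have "tau d q p z = z + (q - p)" using tau_g2'[OF valid_sym[OF assms] True] .
    then show ?thesis using tau_g1[OF True] by simp
  next
    case F1: False
    show ?thesis
    proof (cases "cg d z q \<or> cg d z (-p)")
      case True
      then show ?thesis using tau_g2[OF F1 True] tau_g1[of d z q p] by auto
    next
      case False
      then show ?thesis using tau_g3[OF F1 False] tau_g3[of d z q p] F1 by auto
    qed
  qed
qed

lemma tau_inv: assumes "valid d p q" shows "tau d p q (tau d p q z) = z"
proof -
  have v: "\<not> cg d p (-p)" "\<not> cg d q (-q)" "\<not> cg d p q" using assms by (auto simp: valid_def)
  have v2: "\<not> cg d (-p) (-q)" using v(3) cg_neg_iff by blast
  show ?thesis
  proof (cases "cg d z p \<or> cg d z (-q)")
    case True
    let ?b = "z + (q - p)"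
    have "cg d ?b q \<or> cg d ?b (-p)" using True cg_shift[of d z "q - p"] by auto
    then show ?thesis using tau_g1[OF True] tau_g2'[OF assms] by simp
  next
    case F1: False
    show ?thesis
    proof (cases "cg d z q \<or> cg d z (-p)")
      case True
      let ?b = "z + (p - q)"
      have "cg d ?b p \<or> cg d ?b (-q)" using True cg_shift[of d z "p - q"] by auto
      then show ?thesis using tau_g2[OF F1 True] tau_g1 by simp
    next
      case False
      then show ?thesis using tau_g3[OF F1 False] by simp
    qed
  qed
qed

lemma cg_D: "cg d (z + DD d) y \<longleftrightarrow> cg d z y"
  unfolding cg_def by (metis add_diff_eq diff_add_eq dvd_add_left_iff dvd_refl)

lemma tau_per: "tau d p q (z + DD d) = tau d p q z + DD d"
  unfolding tau_def cg_D by simp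

lemma tau_odd: assumes v: "valid d p q" shows "tau d p q (- z) = - tau d p q z"
proof -
  have e: "cg d (-z) y \<longleftrightarrow> cg d z (-y)" for y using cg_neg_iff[of d z "-y"] by simp
  have ng: "\<not> ((cg d z p \<or> cg d z (-q)) \<and> (cg d z q \<or> cg d z (-p)))" using valid_groups[OF v] .
  show ?thesis unfolding tau_def e using ng by auto
qed

lemma tau_bij: "valid d p q \<Longrightarrow> bij (tau d p q)"
  by (metis bijI' tau_inv)

lemma tau_W: "valid d p q \<Longrightarrow> tau d p q \<in> Wgrp d"
  unfolding Wgrp_def using tau_bij tau_per tau_odd by blast

lemma tau_conj_pt:
  assumes w: "w \<in> Wgrp d"
  shows "w (tau d p q u) = tau d (w p) (w q) (w u)"
proof -
  have c1: "cg d (w u) (w p) \<longleftrightarrow> cg d u p" using W_cg[OF w] .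
  have c2: "cg d (w u) (- w q) \<longleftrightarrow> cg d u (-q)" using W_cg[OF w, of u "-q"] W_odd[OF w] by simp
  have c3: "cg d (w u) (w q) \<longleftrightarrow> cg d u q" using W_cg[OF w] .
  have c4: "cg d (w u) (- w p) \<longleftrightarrow> cg d u (-p)" using W_cg[OF w, of u "-p"] W_odd[OF w] by simp
  show ?thesis
  proof (cases "cg d u p \<or> cg d u (-q)")
    case True
    have "w (u + (q - p)) = w u + (w q - w p)"
    proof (cases "cg d u p")
      case True
      then obtain m where m: "u = p + m * DD d" using cg_ex by blast
      have "w (u + (q - p)) = w (q + m * DD d)" using m by (simp add: algebra_simps)
      then show ?thesis using m W_perm[OF w] by simp
    next
      case False
      then have "cg d u (-q)" using True by blast
      then obtain m where m: "u = -q + m * DD d" using cg_ex by blast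
      have "w (u + (q - p)) = w (-p + m * DD d)" using m by (simp add: algebra_simps)
      then show ?thesis using m W_perm[OF w, of "-p" m] W_perm[OF w, of "-q" m] W_odd[OF w] by simp
    qed
    then show ?thesis using True c1 c2 by (simp add: tau_def)
  next
    case F1: False
    show ?thesis
    proof (cases "cg d u q \<or> cg d u (-p)")
      case True
      have "w (u + (p - q)) = w u + (w p - w q)"
      proof (cases "cg d u q")
        case True
        then obtain m where m: "u = q + m * DD d" using cg_ex by blast
        have "w (u + (p - q)) = w (p + m * DD d)" using m by (simp add: algebra_simps)
        then show ?thesis using m W_perm[OF w] by simp
      next
        case False
        then have "cg d u (-p)" using True by blast
        then obtain m where m: "u = -p + m * DD d" using cg_ex by blast
        have "w (u + (p - q)) = w (-q + m * DD d)" using m by (simp add: algebra_simps)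
        then show ?thesis using m W_perm[OF w, of "-p" m] W_perm[OF w, of "-q" m] W_odd[OF w] by simp
      qed
      then show ?thesis using True F1 c1 c2 c3 c4 by (simp add: tau_def)
    next
      case False
      then show ?thesis using F1 c1 c2 c3 c4 by (simp add: tau_def)
    qed
  qed
qed

lemma tau_conj:
  assumes w: "w \<in> Wgrp d"
  shows "w \<circ> tau d p q \<circ> inv w = tau d (w p) (w q)"
proof
  fix z
  show "(w \<circ> tau d p q \<circ> inv w) z = tau d (w p) (w q) z"
    using tau_conj_pt[OF w, of p q "inv w z"] W_inv_r[OF w] by simp
qed

lemma valid_conj: assumes w: "w \<in> Wgrp d" shows "valid d (w p) (w q) \<longleftrightarrow> valid d p q"
  unfolding valid_def using W_cg[OF w] W_odd[OF w] by metis

lemma tau_moved: assumes "valid d p q" "tau d p q a \<noteq> a" shows "\<not> cg d a (-a)"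
proof
  assume a: "cg d a (-a)"
  have v: "\<not> cg d p (-p)" "\<not> cg d q (-q)" "\<not> cg d p q" using assms by (auto simp: valid_def)
  have "cg d a p \<or> cg d a (-q) \<or> cg d a q \<or> cg d a (-p)" using assms(2) tau_g3 by blast
  then show False
  proof (elim disjE)
    assume h: "cg d a p"
    then have "cg d (-a) (-p)" using cg_neg by blast
    then show False using h a v cg_sym cg_trans by metis
  next
    assume h: "cg d a (-q)"
    then have "cg d (-a) q" using cg_neg by fastforce
    then show False using h a v cg_sym cg_trans by metis
  next
    assume h: "cg d a q"
    then have "cg d (-a) (-q)" using cg_neg by blast
    then show False using h a v cg_sym cg_trans by metis
  next
    assume h: "cg d a (-p)"
    then have "cg d (-a) p" using cg_neg by fastforce
    then show False using h a v cg_sym cg_trans by metis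
  qed
qed



lemma cg_repl: "cg d a a' \<Longrightarrow> (cg d z a \<longleftrightarrow> cg d z a')"
  using cg_sym cg_trans by metis

lemma tau_eqI:
  assumes "\<And>z. (cg d z a \<or> cg d z (-b)) \<longleftrightarrow> (cg d z p \<or> cg d z (-q))"
    "\<And>z. (cg d z b \<or> cg d z (-a)) \<longleftrightarrow> (cg d z q \<or> cg d z (-p))" "b - a = q - p"
  shows "tau d a b = tau d p q"
proof
  fix z show "tau d a b z = tau d p q z"
    using assms(1)[of z] assms(2)[of z] assms(3) unfolding tau_def by auto
qed

lemma tau_det:
  assumes v: "valid d p q" and m: "tau d p q a \<noteq> a"
  shows "tau d p q = tau d a (tau d p q a)"
proof -
  let ?b = "tau d p q a"
  have "cg d a p \<or> cg d a (-q) \<or> cg d a q \<or> cg d a (-p)" using m tau_g3 by blast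
  then show ?thesis
  proof (elim disjE)
    assume h: "cg d a p"
    have b: "?b = a + (q - p)" using tau_g1 h by blast
    have hb: "cg d ?b q" using h b cg_shift[of d a "q-p" q] by simp
    have "tau d a ?b = tau d p q"
      by (rule tau_eqI) (use cg_repl[OF h] cg_repl[OF cg_neg[OF hb]] cg_repl[OF hb]
            cg_repl[OF cg_neg[OF h]] b in auto)
    then show ?thesis by simp
  next
    assume h: "cg d a (-q)"
    have b: "?b = a + (q - p)" using tau_g1 h by blast
    have hb: "cg d ?b (-p)" using h b cg_shift[of d a "q-p" "-p"] by simp
    have n1: "cg d (-a) q" using cg_neg[OF h] by simp
    have n2: "cg d (-?b) p" using cg_neg[OF hb] by simp
    have "tau d a ?b = tau d p q"
      by (rule tau_eqI) (use cg_repl[OF h] cg_repl[OF n2] cg_repl[OF hb]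
            cg_repl[OF n1] b in auto)
    then show ?thesis by simp
  next
    assume h: "cg d a q"
    have b: "?b = a + (p - q)" using tau_g2' v h by blast
    have hb: "cg d ?b p" using h b cg_shift[of d a "p-q" p] by simp
    have "tau d a ?b = tau d q p"
      by (rule tau_eqI) (use cg_repl[OF h] cg_repl[OF cg_neg[OF hb]] cg_repl[OF hb]
            cg_repl[OF cg_neg[OF h]] b in auto)
    then show ?thesis using tau_swap[OF v] by simp
  next
    assume h: "cg d a (-p)"
    have b: "?b = a + (p - q)" using tau_g2' v h by blast
    have hb: "cg d ?b (-q)" using h b cg_shift[of d a "p-q" "-q"] by simp
    have n1: "cg d (-a) p" using cg_neg[OF h] by simp
    have n2: "cg d (-?b) q" using cg_neg[OF hb] by simp
    have "tau d a ?b = tau d q p"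
      by (rule tau_eqI) (use cg_repl[OF h] cg_repl[OF n2] cg_repl[OF hb]
            cg_repl[OF n1] b in auto)
    then show ?thesis using tau_swap[OF v] by simp
  qed
qed

lemma tau_det2:
  assumes v1: "valid d p q" and v2: "valid d p' q'"
    and e: "tau d p q a = b" "tau d p' q' a = b" and ne: "b \<noteq> a"
  shows "tau d p q = tau d p' q'"
  using tau_det[OF v1] tau_det[OF v2] e ne by metis



lemma small_dvd: "(0::int) < D \<Longrightarrow> 0 \<le> m \<Longrightarrow> m < D \<Longrightarrow> -D < c \<Longrightarrow> c < D \<Longrightarrow> D dvd (m - c) \<Longrightarrow> m = c \<or> m = c + D"
  by (smt (verit) dvd_add_triv_right_iff dvd_minus_iff zdvd_imp_le)

lemma cg_res:
  assumes "- DD d < c" "c < DD d"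
  shows "cg d i c \<longleftrightarrow> (i mod DD d = c \<or> i mod DD d = c + DD d)"
proof -
  let ?D = "DD d"
  have D: "?D > 0" by (rule DD_pos)
  have "cg d i c \<longleftrightarrow> ?D dvd (i mod ?D - c)"
    unfolding cg_def by (metis mod_eq_dvd_iff mod_mod_trivial)
  also have "\<dots> \<longleftrightarrow> (i mod ?D = c \<or> i mod ?D = c + ?D)"
  proof
    assume "?D dvd (i mod ?D - c)"
    then show "i mod ?D = c \<or> i mod ?D = c + ?D"
      using small_dvd[OF D _ _ assms] D by simp
  next
    assume "i mod ?D = c \<or> i mod ?D = c + ?D"
    then show "?D dvd (i mod ?D - c)" by auto
  qed
  finally show ?thesis .
qed

definition pa :: "nat \<Rightarrow> nat \<Rightarrow> int" where "pa d k = (if k = 0 then -1 else int k)"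
definition pb :: "nat \<Rightarrow> nat \<Rightarrow> int" where
  "pb d k = (if k = 0 then 1 else if k = d then int d + 2 else int k + 1)"

lemma sref_tau_pt:
  assumes d: "2 \<le> d" and k: "k \<le> d"
  shows "sref d k i = tau d (pa d k) (pb d k) i"
proof -
  let ?D = "DD d"
  define m where "m = i mod ?D"
  have D: "?D = 2 * int d + 2" by (simp add: DD_def)
  have m0: "0 \<le> m" "m < ?D" using DD_pos[of d] by (auto simp: m_def)
  have i: "i = ?D * (i div ?D) + m" by (simp add: m_def)
  have s: "sref d k i = ?D * (i div ?D) + sres d k m" by (simp add: sref_def m_def)
  have cr: "cg d i c \<longleftrightarrow> (m = c \<or> m = c + ?D)" if "- ?D < c" "c < ?D" for c
    using cg_res[OF that] m_def by simp
  show ?thesis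
  proof (cases "k = 0")
    case True
    have c1: "cg d i (-1) \<longleftrightarrow> m = ?D - 1" using cr[of "-1"] D m0 d by auto
    have c2: "cg d i 1 \<longleftrightarrow> m = 1" using cr[of "1"] D m0 d by auto
    show ?thesis using True s i c1 c2 D d
      by (simp add: tau_def pa_def pb_def sres_def Let_def)
  next
    case k0: False
    show ?thesis
    proof (cases "k = d")
      case True
      have c1: "cg d i (int d) \<longleftrightarrow> m = int d" using cr[of "int d"] D m0 d by auto
      have c2: "cg d i (-(int d + 2)) \<longleftrightarrow> m = int d" using cr[of "-(int d + 2)"] D m0 d by auto
      have c3: "cg d i (int d + 2) \<longleftrightarrow> m = int d + 2" using cr[of "int d + 2"] D m0 d by auto
      have c4: "cg d i (- int d) \<longleftrightarrow> m = int d + 2" using cr[of "- int d"] D m0 d by auto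
      show ?thesis using True k0 s i c1 c2 c3 c4 D d
        by (simp add: tau_def pa_def pb_def sres_def Let_def)
    next
      case kd: False
      have kk: "1 \<le> int k" "int k < int d" using k0 kd k by auto
      have c1: "cg d i (int k) \<longleftrightarrow> m = int k" using cr[of "int k"] D m0 kk d by auto
      have c2: "cg d i (-(int k + 1)) \<longleftrightarrow> m = ?D - int k - 1" using cr[of "-(int k + 1)"] D m0 kk d by auto
      have c3: "cg d i (int k + 1) \<longleftrightarrow> m = int k + 1" using cr[of "int k + 1"] D m0 kk d by auto
      have c4: "cg d i (- int k) \<longleftrightarrow> m = ?D - int k" using cr[of "- int k"] D m0 kk d by auto
      show ?thesis using kd k0 k s i c1 c2 c3 c4 D d kk
        by (simp add: tau_def pa_def pb_def sres_def Let_def)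
    qed
  qed
qed

lemma sref_tau: "2 \<le> d \<Longrightarrow> k \<le> d \<Longrightarrow> sref d k = tau d (pa d k) (pb d k)"
  using sref_tau_pt by blast

lemma not_cg_small: "0 < x \<Longrightarrow> x < DD d \<Longrightarrow> \<not> cg d x 0"
  unfolding cg_def using zdvd_not_zless by fastforce

lemma valid_pab:
  assumes d: "2 \<le> d" and k: "k \<le> d"
  shows "valid d (pa d k) (pb d k)"
proof -
  have D: "DD d = 2 * int d + 2" by (simp add: DD_def)
  have cgz: "cg d x y \<longleftrightarrow> cg d (x - y) 0" for x y by (simp add: cg_def)
  have cgn: "cg d x 0 \<longleftrightarrow> cg d (-x) 0" for x by (simp add: cg_def)
  have cgD: "cg d (x + DD d) 0 \<longleftrightarrow> cg d x 0" for x using cg_D by blast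
  show ?thesis
  proof (cases "k = 0")
    case True
    then show ?thesis unfolding valid_def pa_def pb_def
      using not_cg_small[of 2 d] D d cgz cgn by (auto simp: cg_def)
  next
    case k0: False
    show ?thesis
    proof (cases "k = d")
      case True
      have a: "\<not> cg d (2 * int d) 0" using not_cg_small[of "2 * int d" d] D d by simp
      have b: "\<not> cg d (2 * int d + 4) 0"
        using not_cg_small[of 2 d] D d cgD[of 2] by (simp add: algebra_simps)
      have c: "\<not> cg d 2 0" using not_cg_small[of 2 d] D d by simp
      show ?thesis unfolding valid_def pa_def pb_def using True k0 a b c cgz[of "int d" "- int d"]
        cgz[of "int d + 2" "-(int d + 2)"] cgz[of "int d" "int d + 2"] cgn[of 2]
        by (simp add: algebra_simps)
    next
      case kd: False
      have kk: "1 \<le> int k" "int k < int d" using k0 kd k by auto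
      have a: "\<not> cg d (2 * int k) 0" using not_cg_small[of "2 * int k" d] D kk by simp
      have b: "\<not> cg d (2 * int k + 2) 0" using not_cg_small[of "2 * int k + 2" d] D kk by simp
      have c: "\<not> cg d 1 0" using not_cg_small[of 1 d] D by simp
      show ?thesis unfolding valid_def pa_def pb_def using kd k0 a b c cgz[of "int k" "- int k"]
        cgz[of "int k + 1" "-(int k + 1)"] cgz[of "int k" "int k + 1"] cgn[of 1]
        by (simp add: algebra_simps)
    qed
  qed
qed

lemma sref_W: "2 \<le> d \<Longrightarrow> k \<le> d \<Longrightarrow> sref d k \<in> Wgrp d"
  using sref_tau valid_pab tau_W by metis

lemma sref_inv: "2 \<le> d \<Longrightarrow> k \<le> d \<Longrightarrow> sref d k (sref d k z) = z"
  using sref_tau valid_pab tau_inv by metis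



definition F :: "nat \<Rightarrow> nat list \<Rightarrow> int \<Rightarrow> int" where
  "F d ws = foldr (\<lambda>k f. sref d k \<circ> f) ws id"

lemma foldr_base: "foldr (\<lambda>k f. sref d k \<circ> f) ws b = F d ws \<circ> b"
  by (induction ws) (auto simp: F_def)

lemma F_append: "F d (xs @ ys) = F d xs \<circ> F d ys"
proof -
  have "F d (xs @ ys) = foldr (\<lambda>k f. sref d k \<circ> f) xs (F d ys)"
    by (simp add: F_def)
  also have "\<dots> = F d xs \<circ> F d ys" by (rule foldr_base)
  finally show ?thesis .
qed

lemma F_Cons: "F d (c # ws) = sref d c \<circ> F d ws" by (simp add: F_def)
lemma F_Nil: "F d [] = id" by (simp add: F_def)

lemma F_W: "2 \<le> d \<Longrightarrow> set ws \<subseteq> {0..d} \<Longrightarrow> F d ws \<in> Wgrp d"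
  by (induction ws) (auto simp: F_Nil F_Cons W_id W_comp sref_W)

lemma W_fix:
  assumes y: "y \<in> Wgrp d" and f: "\<And>a. 1 \<le> a \<Longrightarrow> a \<le> int d \<Longrightarrow> y a = a"
  shows "y = id"
proof
  fix z
  let ?D = "DD d"
  define m where "m = z mod ?D"
  have D: "?D = 2 * int d + 2" by (simp add: DD_def)
  have m0: "0 \<le> m" "m < ?D" using DD_pos[of d] by (auto simp: m_def)
  have z: "z = m + (z div ?D) * ?D" by (simp add: m_def)
  have yz: "y z = y m + (z div ?D) * ?D" using W_perm[OF y, of m "z div ?D"] z by simp
  have "y m = m"
  proof -
    consider "m = 0" | "1 \<le> m \<and> m \<le> int d" | "m = int d + 1" | "int d + 2 \<le> m" using m0 D by linarith
    then show ?thesis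
    proof cases
      case 1 then show ?thesis using W_zero[OF y] by simp
    next
      case 2 then show ?thesis using f by simp
    next
      case 3
      have "y (?D - (int d + 1)) = ?D - y (int d + 1)" using W_refl[OF y] .
      then show ?thesis using 3 D by simp
    next
      case 4
      have "y (?D - (?D - m)) = ?D - y (?D - m)" using W_refl[OF y] .
      moreover have "y (?D - m) = ?D - m" using f 4 m0 D by simp
      ultimately show ?thesis by simp
    qed
  qed
  then show "y z = id z" using yz z by simp
qed

lemma incr_fix:
  fixes y :: "int \<Rightarrow> int"
  assumes s: "\<And>c. 1 \<le> c \<Longrightarrow> c < int d \<Longrightarrow> y c < y (c + 1)" and lo: "0 < y 1" and hi: "y (int d) \<le> int d"
    and a: "1 \<le> a" "a \<le> int d"
  shows "y a = a"
proof -
  have ge: "\<forall>a. 1 \<le> a \<longrightarrow> a \<le> int d \<longrightarrow> y a \<ge> a"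
  proof (intro allI impI)
    fix a :: int assume "1 \<le> a" "a \<le> int d"
    then show "y a \<ge> a"
    proof (induction a rule: int_ge_induct)
      case base then show ?case using lo by simp
    next
      case (step i) then show ?case using s[of i] by simp
    qed
  qed
  have le: "\<forall>n::nat. int d - int n \<ge> 1 \<longrightarrow> y (int d - int n) \<le> int d - int n"
  proof (intro allI)
    fix n show "int d - int n \<ge> 1 \<longrightarrow> y (int d - int n) \<le> int d - int n"
    proof (induction n)
      case 0 then show ?case using hi by simp
    next
      case (Suc n)
      then show ?case using s[of "int d - int (Suc n)"] by auto
    qed
  qed
  have "y a \<le> a" using le[rule_format, of "nat (int d - a)"] a by simp
  then show ?thesis using ge a by force
qed

lemma sref_small: "0 \<le> a \<Longrightarrow> a < DD d \<Longrightarrow> sref d k a = sres d k a"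
  by (simp add: sref_def)

definition Phi :: "nat \<Rightarrow> (int \<Rightarrow> int) \<Rightarrow> int" where
  "Phi d y = (\<Sum>a\<in>{1..int d}. (y a - a)^2)"

lemma Phi_nn: "Phi d y \<ge> 0" by (simp add: Phi_def sum_nonneg)

lemma sum_supp: "finite A \<Longrightarrow> S \<subseteq> A \<Longrightarrow> (\<And>a. a \<in> A - S \<Longrightarrow> f a = 0) \<Longrightarrow> sum f A = sum f S"
  by (metis sum.mono_neutral_right)

lemma Phi_diff:
  assumes S: "S \<subseteq> {1..int d}" and eq: "\<And>a. a \<in> {1..int d} - S \<Longrightarrow> y' a = y a"
  shows "Phi d y' - Phi d y = (\<Sum>a\<in>S. (y' a - a)^2 - (y a - a)^2)"
proof -
  have "Phi d y' - Phi d y = (\<Sum>a\<in>{1..int d}. (y' a - a)^2 - (y a - a)^2)"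
    by (simp add: Phi_def sum_subtractf)
  also have "\<dots> = (\<Sum>a\<in>S. (y' a - a)^2 - (y a - a)^2)"
    by (rule sum_supp) (use S eq in auto)
  finally show ?thesis .
qed



lemma W_d2: "y \<in> Wgrp d \<Longrightarrow> y (int d + 2) = DD d - y (int d)"
  using W_refl[of y d "int d"] by (simp add: DD_def)

lemma no_desc_id:
  assumes d: "2 \<le> d" and y: "y \<in> Wgrp d" and nd: "\<And>c. c \<le> d \<Longrightarrow> y (pa d c) < y (pb d c)"
  shows "y = id"
proof (rule W_fix[OF y])
  have lo: "0 < y 1" using nd[of 0] W_odd[OF y, of 1] by (simp add: pa_def pb_def)
  have hi: "y (int d) \<le> int d" using nd[of d] W_d2[OF y] d by (simp add: pa_def pb_def DD_def)
  have s: "y c < y (c + 1)" if "1 \<le> c" "c < int d" for c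
  proof -
    have "nat c \<le> d" "nat c \<noteq> d" "nat c \<noteq> 0" "int (nat c) = c" using that by auto
    then show ?thesis using nd[of "nat c"] by (simp add: pa_def pb_def)
  qed
  fix a :: int assume "1 \<le> a" "a \<le> int d"
  then show "y a = a" using incr_fix[OF s lo hi] by blast
qed

lemma desc_dec:
  assumes d: "2 \<le> d" and y: "y \<in> Wgrp d" and c: "c \<le> d" and ds: "y (pa d c) > y (pb d c)"
  shows "Phi d (y \<circ> sref d c) < Phi d y"
proof -
  have D: "DD d = 2 * int d + 2" by (simp add: DD_def)
  have sm: "sref d c a = sres d c a" if "1 \<le> a" "a \<le> int d" for a
    using sref_small[of a d c] that D by simp
  show ?thesis
  proof (cases "c = 0")
    case True
    have "Phi d (y \<circ> sref d c) - Phi d y = (\<Sum>a\<in>{1}. ((y \<circ> sref d c) a - a)^2 - (y a - a)^2)"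
      by (rule Phi_diff) (use sm True D d in \<open>auto simp: sres_def Let_def\<close>)
    also have "\<dots> = (- y 1 - 1)^2 - (y 1 - 1)^2"
      using sm[of 1] True d W_odd[OF y, of 1] by (simp add: sres_def Let_def)
    also have "\<dots> < 0" using ds True W_odd[OF y, of 1] by (simp add: pa_def pb_def power2_eq_square algebra_simps)
    finally show ?thesis by simp
  next
    case c0: False
    show ?thesis
    proof (cases "c = d")
      case True
      have "Phi d (y \<circ> sref d c) - Phi d y = (\<Sum>a\<in>{int d}. ((y \<circ> sref d c) a - a)^2 - (y a - a)^2)"
        by (rule Phi_diff) (use sm True D d in \<open>auto simp: sres_def Let_def\<close>)
      also have "\<dots> = (DD d - y (int d) - int d)^2 - (y (int d) - int d)^2"
        using sm[of "int d"] True d W_d2[OF y] by (simp add: sres_def Let_def)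
      also have "\<dots> < 0" using ds True W_d2[OF y] D d
        by (simp add: pa_def pb_def power2_eq_square algebra_simps)
      finally show ?thesis by simp
    next
      case cd: False
      have cc: "1 \<le> int c" "int c < int d" using c0 cd c by auto
      have e1: "sref d c (int c) = int c + 1" using sm[of "int c"] cc c0 cd by (simp add: sres_def Let_def)
      have e2: "sref d c (int c + 1) = int c" using sm[of "int c + 1"] cc c0 cd by (simp add: sres_def Let_def)
      have "Phi d (y \<circ> sref d c) - Phi d y = (\<Sum>a\<in>{int c, int c + 1}. ((y \<circ> sref d c) a - a)^2 - (y a - a)^2)"
        by (rule Phi_diff) (use sm c0 cd cc D d in \<open>auto simp: sres_def Let_def\<close>)
      also have "\<dots> = ((y (int c + 1) - int c)^2 - (y (int c) - int c)^2)
                     + ((y (int c) - int c - 1)^2 - (y (int c + 1) - int c - 1)^2)"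
        using e1 e2 by (simp add: algebra_simps)
      also have "\<dots> < 0" using ds c0 cd
        by (simp add: pa_def pb_def power2_eq_square algebra_simps)
      finally show ?thesis by simp
    qed
  qed
qed

lemma generation:
  assumes d: "2 \<le> d"
  shows "y \<in> Wgrp d \<Longrightarrow> \<exists>ws. set ws \<subseteq> {0..d} \<and> F d ws = y"
proof (induction "nat (Phi d y)" arbitrary: y rule: less_induct)
  case less
  show ?case
  proof (cases "\<forall>c \<le> d. y (pa d c) < y (pb d c)")
    case True
    then have "y = id" using no_desc_id[OF d less.prems] by blast
    then show ?thesis by (intro exI[of _ "[]"]) (simp add: F_Nil)
  next
    case False
    then obtain c where c: "c \<le> d" and nl: "\<not> y (pa d c) < y (pb d c)" by blast
    have ne: "pa d c \<noteq> pb d c" by (simp add: pa_def pb_def)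
    have "y (pa d c) \<noteq> y (pb d c)" using W_inj[OF less.prems] ne by (simp add: inj_eq)
    then have ds: "y (pa d c) > y (pb d c)" using nl by simp
    let ?y = "y \<circ> sref d c"
    have yW: "?y \<in> Wgrp d" using W_comp[OF less.prems sref_W[OF d c]] .
    have "Phi d ?y < Phi d y" using desc_dec[OF d less.prems c ds] .
    then have "nat (Phi d ?y) < nat (Phi d y)" using Phi_nn[of d ?y] by simp
    then obtain ws where ws: "set ws \<subseteq> {0..d}" "F d ws = ?y" using less.hyps yW by blast
    have "F d (ws @ [c]) = y"
    proof
      fix z show "F d (ws @ [c]) z = y z"
        using ws(2) sref_inv[OF d c] by (simp add: F_append F_Cons F_Nil)
    qed
    then show ?thesis using ws c by (intro exI[of _ "ws @ [c]"]) auto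
  qed
qed

lemma wlen_le: "set ws \<subseteq> {0..d} \<Longrightarrow> F d ws = g \<Longrightarrow> wlen d g \<le> length ws"
  unfolding wlen_def F_def by (rule Least_le) blast

lemma wlen_word:
  assumes d: "2 \<le> d" and g: "g \<in> Wgrp d"
  shows "\<exists>ws. length ws = wlen d g \<and> set ws \<subseteq> {0..d} \<and> F d ws = g"
proof -
  obtain ws where "set ws \<subseteq> {0..d}" "F d ws = g" using generation[OF d g] by blast
  then have "\<exists>n ws. length ws = n \<and> set ws \<subseteq> {0..d} \<and> foldr (\<lambda>k f. sref d k \<circ> f) ws id = g"
    unfolding F_def by blast
  then have "\<exists>ws. length ws = wlen d g \<and> set ws \<subseteq> {0..d} \<and> foldr (\<lambda>k f. sref d k \<circ> f) ws id = g"
    unfolding wlen_def by (rule LeastI_ex)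
  then show ?thesis unfolding F_def .
qed



lemma K1_1:
  assumes "q = p + 1" "a < b" "tau d p q a > tau d p q b"
  shows "tau d p q a = b"
proof -
  have u: "tau d p q z \<le> z + 1" "tau d p q z \<ge> z - 1" for z using assms(1) by (auto simp: tau_def)
  show ?thesis using u[of a] u[of b] assms(2,3) by linarith
qed

lemma tau2:
  assumes q: "q = p + 2" and c: "cg d (-q) p"
  shows "tau d p q z = (if cg d z p then z + 2 else if cg d z q then z - 2 else z)"
proof -
  have e1: "cg d z (-q) \<longleftrightarrow> cg d z p" using cg_repl[OF c] .
  have c': "cg d (-p) q" using cg_neg[OF c] cg_sym by fastforce
  have e2: "cg d z (-p) \<longleftrightarrow> cg d z q" using cg_repl[OF c'] .
  show ?thesis unfolding tau_def e1 e2 using q by simp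
qed

lemma dvd_small0: "(1::int) < D \<Longrightarrow> D dvd x \<Longrightarrow> -1 \<le> x \<Longrightarrow> x \<le> 1 \<Longrightarrow> x = 0"
  by (smt (verit) dvd_minus_iff zdvd_imp_le)

lemma K1_2:
  assumes q: "q = p + 2" and c: "cg d (-q) p"
    and ab: "a < b" and na: "\<not> cg d a (-a)" and nb: "\<not> cg d b (-b)"
    and gt: "tau d p q a > tau d p q b"
  shows "tau d p q a = b"
proof -
  have t: "tau d p q z = (if cg d z p then z + 2 else if cg d z q then z - 2 else z)" for z
    using tau2[OF q c] .
  have D1: "DD d > 1" by (simp add: DD_def)
  have mid: "cg d (p+1) (-(p+1))" using c q unfolding cg_def
    by (metis add.commute add_uminus_conv_diff diff_minus_eq_add dvd_minus_iff minus_add_distrib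
        one_add_one add.assoc)
  have midb: "cg d x (p+1) \<Longrightarrow> cg d x (-x)" for x
  proof -
    assume h: "cg d x (p+1)"
    have "cg d (-x) (-(p+1))" using cg_neg[OF h] .
    then show ?thesis using h mid cg_sym cg_trans by metis
  qed
  show ?thesis
  proof (cases "cg d a p")
    case ap: True
    show ?thesis
    proof (cases "cg d b p")
      case True then show ?thesis using gt ab t[of a] t[of b] ap by simp
    next
      case bp: False
      show ?thesis
      proof (cases "cg d b q")
        case True
        have lt: "b < a + 4" using gt t[of a] t[of b] ap bp True by simp
        have "DD d dvd ((b - q) - (a - p))" using ap True unfolding cg_def by (rule_tac dvd_diff) auto
        then have "DD d dvd (b - a - 2)" using q by (simp add: algebra_simps)
        then have "b - a - 2 = 0" using dvd_small0[OF D1] ab lt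
          by (smt (verit) dvd_small0[OF D1, of "b - a - 2"] lt ab)
        then show ?thesis using t[of a] ap by simp
      next
        case False
        have "b = a + 1" using gt t[of a] t[of b] ap bp False ab by simp
        then have "cg d b (p+1)" using ap cg_add[OF ap, of 1] by simp
        then show ?thesis using midb nb by blast
      qed
    qed
  next
    case anp: False
    show ?thesis
    proof (cases "cg d a q")
      case True
      then show ?thesis using gt ab t[of a] t[of b] anp by (auto split: if_splits)
    next
      case anq: False
      have ta: "tau d p q a = a" using t[of a] anp anq by simp
      show ?thesis
      proof (cases "\<not> cg d b p \<and> cg d b q")
        case True
        have "b = a + 1" using gt ta t[of b] True ab by simp
        then have "cg d (a + 1) q" using True by simp
        then have "cg d a (q - 1)" using cg_shift by blast
        moreover have "q - 1 = p + 1" using q by simp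
        ultimately have "cg d a (p + 1)" by simp
        then show ?thesis using midb na by blast
      next
        case False
        then show ?thesis using gt ta t[of b] ab by (auto split: if_splits)
      qed
    qed
  qed
qed

lemma K1:
  assumes d: "2 \<le> d" and c: "c \<le> d" and ab: "a < b"
    and na: "\<not> cg d a (-a)" and nb: "\<not> cg d b (-b)"
    and gt: "sref d c a > sref d c b"
  shows "sref d c a = b"
proof -
  have s: "sref d c = tau d (pa d c) (pb d c)" using sref_tau[OF d c] .
  show ?thesis
  proof (cases "c = 0 \<or> c = d")
    case True
    have q: "pb d c = pa d c + 2" using True by (auto simp: pa_def pb_def)
    have e1: "-(int d + 2) - int d = - DD d" by (simp add: DD_def)
    have e2: "- 1 - (- 1) = (0::int)" by simp
    have cc: "cg d (- pb d c) (pa d c)" using True d e1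
      by (auto simp: pa_def pb_def cg_def)
    show ?thesis using K1_2[OF q cc ab na nb] gt s by simp
  next
    case False
    have q: "pb d c = pa d c + 1" using False by (auto simp: pa_def pb_def)
    show ?thesis using K1_1[OF q ab] gt s by simp
  qed
qed

lemma split_word:
  assumes d: "2 \<le> d"
  shows "set ws \<subseteq> {0..d} \<Longrightarrow> a < b \<Longrightarrow> F d ws a > F d ws b \<Longrightarrow>
    \<exists>ws1 c ws2. ws = ws1 @ c # ws2 \<and> F d ws2 a < F d ws2 b \<and> sref d c (F d ws2 a) > sref d c (F d ws2 b)"
proof (induction ws)
  case Nil then show ?case by (simp add: F_Nil)
next
  case (Cons c ws')
  have sw: "set ws' \<subseteq> {0..d}" using Cons.prems by simp
  show ?case
  proof (cases "F d ws' a > F d ws' b")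
    case True
    then obtain ws1 c' ws2 where "ws' = ws1 @ c' # ws2" "F d ws2 a < F d ws2 b"
        "sref d c' (F d ws2 a) > sref d c' (F d ws2 b)"
      using Cons.IH[OF sw Cons.prems(2)] by blast
    then show ?thesis by (intro exI[of _ "c # ws1"] exI[of _ c'] exI[of _ ws2]) simp
  next
    case False
    have "F d ws' a \<noteq> F d ws' b" using W_inj[OF F_W[OF d sw]] Cons.prems(2) by (simp add: inj_eq)
    then have "F d ws' a < F d ws' b" using False by simp
    moreover have "sref d c (F d ws' a) > sref d c (F d ws' b)" using Cons.prems(3) by (simp add: F_Cons)
    ultimately show ?thesis by (intro exI[of _ "[]"] exI[of _ c] exI[of _ ws']) simp
  qed
qed

lemma nonfix_W: "z \<in> Wgrp d \<Longrightarrow> \<not> cg d a (-a) \<Longrightarrow> \<not> cg d (z a) (- z a)"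
  using W_cg[of z d a "-a"] W_odd[of z d a] by simp

lemma len_drop:
  assumes d: "2 \<le> d" and x: "x \<in> Wgrp d" and v: "valid d p q"
    and ta: "tau d p q a = b" and ab: "a < b" and xab: "x a > x b"
  shows "wlen d (x \<circ> tau d p q) < wlen d x"
proof -
  obtain ws where ws: "length ws = wlen d x" "set ws \<subseteq> {0..d}" "F d ws = x"
    using wlen_word[OF d x] by blast
  obtain ws1 c ws2 where sp: "ws = ws1 @ c # ws2" and lt: "F d ws2 a < F d ws2 b"
    and gt: "sref d c (F d ws2 a) > sref d c (F d ws2 b)"
    using split_word[OF d ws(2) ab] xab ws(3) by blast
  let ?z = "F d ws2"
  have c: "c \<le> d" using ws(2) sp by auto
  have zW: "?z \<in> Wgrp d" using F_W[OF d] ws(2) sp by simp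
  have tb: "tau d p q b = a" using tau_inv[OF v] ta by metis
  have na: "\<not> cg d a (-a)" using tau_moved[OF v] ta ab by simp
  have nb: "\<not> cg d b (-b)" using tau_moved[OF v] tb ab by simp
  have k: "sref d c (?z a) = ?z b"
    using K1[OF d c lt nonfix_W[OF zW na] nonfix_W[OF zW nb] gt] .
  have izW: "inv ?z \<in> Wgrp d" using W_inv[OF zW] .
  have iiz: "inv (inv ?z) = ?z" using W_bij[OF zW] by (simp add: inv_inv_eq)
  have t'eq: "inv ?z \<circ> sref d c \<circ> ?z = tau d (inv ?z (pa d c)) (inv ?z (pb d c))"
    using tau_conj[OF izW, of "pa d c" "pb d c"] iiz sref_tau[OF d c] by simp
  have v': "valid d (inv ?z (pa d c)) (inv ?z (pb d c))"
    using valid_conj[OF izW] valid_pab[OF d c] by simp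
  have t'a: "tau d (inv ?z (pa d c)) (inv ?z (pb d c)) a = b"
    using t'eq[symmetric] k W_inv_l[OF zW] by (metis comp_apply)
  have teq: "tau d p q = inv ?z \<circ> sref d c \<circ> ?z"
    using tau_det2[OF v v' ta t'a] ab t'eq by simp
  have "x \<circ> tau d p q = F d (ws1 @ ws2)"
  proof
    fix u
    show "(x \<circ> tau d p q) u = F d (ws1 @ ws2) u"
    proof -
      have "x = F d ws1 \<circ> sref d c \<circ> ?z" using ws(3) sp by (simp add: F_append F_Cons comp_assoc)
      then have "(x \<circ> tau d p q) u = F d ws1 (sref d c (?z (inv ?z (sref d c (?z u)))))"
        using teq by simp
      also have "\<dots> = F d ws1 (?z u)" using W_inv_r[OF zW] sref_inv[OF d c] by simp
      finally show ?thesis by (simp add: F_append)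
    qed
  qed
  then have "wlen d (x \<circ> tau d p q) \<le> length (ws1 @ ws2)"
    using wlen_le[of "ws1 @ ws2" d] ws(2) sp by simp
  then show ?thesis using ws(1) sp by simp
qed

lemma refl_tau:
  assumes d: "2 \<le> d" and t: "t \<in> reflections d"
  shows "\<exists>p q. valid d p q \<and> t = tau d p q"
proof -
  obtain w k where w: "w \<in> Wgrp d" "k \<le> d" "t = w \<circ> sref d k \<circ> inv w"
    using t unfolding reflections_def by blast
  have "t = tau d (w (pa d k)) (w (pb d k))" using w tau_conj[OF w(1)] sref_tau[OF d w(2)] by simp
  moreover have "valid d (w (pa d k)) (w (pb d k))" using valid_conj[OF w(1)] valid_pab[OF d w(2)] by simp
  ultimately show ?thesis by blast
qed

lemma step_NI:
  assumes d: "2 \<le> d" and x: "x \<in> Wgrp d" and v: "valid d p q"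
    and l: "wlen d x < wlen d (x \<circ> tau d p q)"
  shows "tau d p q u < u \<Longrightarrow> x (tau d p q u) < x u"
proof (rule ccontr)
  assume a: "tau d p q u < u" and n: "\<not> x (tau d p q u) < x u"
  have "x (tau d p q u) \<noteq> x u" using W_inj[OF x] a by (simp add: inj_eq)
  then have "x (tau d p q u) > x u" using n by simp
  moreover have "tau d p q (tau d p q u) = u" using tau_inv[OF v] .
  ultimately have "wlen d (x \<circ> tau d p q) < wlen d x" using len_drop[OF d x v _ a] by blast
  then show False using l by simp
qed



lemma divmod_prev:
  fixes n i :: int assumes n: "n > 0"
  shows "i mod n = 0 \<Longrightarrow> (i-1) div n = i div n - 1 \<and> (i-1) mod n = n - 1"
    and "i mod n \<noteq> 0 \<Longrightarrow> (i-1) div n = i div n \<and> (i-1) mod n = i mod n - 1"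
proof -
  have i: "i = i mod n + (i div n) * n" by simp
  have m0: "0 \<le> i mod n" "i mod n < n" using n by auto
  { assume "i mod n = 0"
    then have e: "i - 1 = (n - 1) + (i div n - 1) * n" using i by (simp add: algebra_simps)
    have "(i-1) div n = (n - 1) div n + (i div n - 1)" unfolding e using n by (simp only: div_mult_self1)
    moreover have "(i-1) mod n = (n-1) mod n" unfolding e by (simp only: mod_mult_self1)
    moreover have "(n - 1) div n = 0" using n by (intro div_pos_pos_trivial) auto
    moreover have "(n - 1) mod n = n - 1" using n by (intro mod_pos_pos_trivial) auto
    ultimately show "(i-1) div n = i div n - 1 \<and> (i-1) mod n = n - 1" by simp }
  { assume h: "i mod n \<noteq> 0"
    then have e: "i - 1 = (i mod n - 1) + (i div n) * n" using i by (simp add: algebra_simps)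
    have "(i-1) div n = (i mod n - 1) div n + i div n" unfolding e using n by simp
    moreover have "(i-1) mod n = (i mod n - 1) mod n" unfolding e by simp
    ultimately show "(i-1) div n = i div n \<and> (i-1) mod n = i mod n - 1" using h m0 by simp }
qed

lemma lam0_Suc: "Suc j < length l \<Longrightarrow> lam0 l (Suc j) = lam0 l j + int (l ! Suc j)"
  unfolding lam0_def by (simp add: take_Suc_conv_app_nth[of "Suc j"])

lemma lam0_0: "0 < length l \<Longrightarrow> lam0 l 0 = int (l ! 0)"
  unfolding lam0_def by (simp add: take_Suc_conv_app_nth[of 0])

lemma lam0_mono: "i \<le> j \<Longrightarrow> lam0 l i \<le> lam0 l j"
proof -
  assume "i \<le> j"
  then have "take (Suc j) l = take (Suc i) l @ take (j - i) (drop (Suc i) l)"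
    by (metis Suc_le_mono add_Suc le_add_diff_inverse take_add)
  then show ?thesis unfolding lam0_def by simp
qed

lemma lam0_r: "l \<in> Lambda r d \<Longrightarrow> lam0 l r = int d - int (l ! (r+1))"
proof -
  assume L: "l \<in> Lambda r d"
  have len: "length l = r + 2" and s: "sum_list l = d" using L by (auto simp: Lambda_def)
  have "lam0 l (Suc r) = lam0 l r + int (l ! Suc r)" using lam0_Suc[of r l] len by simp
  moreover have "lam0 l (Suc r) = int d" using len s by (simp add: lam0_def)
  ultimately show ?thesis by simp
qed

definition Eb :: "nat \<Rightarrow> nat \<Rightarrow> nat list \<Rightarrow> int \<Rightarrow> int" where
  "Eb r d l m = (if m \<le> int r then lam0 l (nat m) else if m = int r + 1 then int d + 1 + int (l ! (r+1))
                 else DD d - 1 - lam0 l (nat (2 * int r + 1 - m)))"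

definition Ee :: "nat \<Rightarrow> nat \<Rightarrow> nat list \<Rightarrow> int \<Rightarrow> int" where
  "Ee r d l i = (i div (2 * int r + 2)) * DD d + Eb r d l (i mod (2 * int r + 2))"

lemma img_add: "(\<lambda>x. x + c) ` {a..b::int} = {a + c..b + c}"
proof
  show "{a + c..b + c} \<subseteq> (\<lambda>x. x + c) ` {a..b}"
  proof
    fix y assume "y \<in> {a + c..b + c}"
    then show "y \<in> (\<lambda>x. x + c) ` {a..b}" by (intro image_eqI[of _ _ "y - c"]) auto
  qed
qed auto

lemma img_sub: "(\<lambda>x. c - x) ` {a..b::int} = {c - b..c - a}"
proof
  show "{c - b..c - a} \<subseteq> (\<lambda>x. c - x) ` {a..b}"
  proof
    fix y assume "y \<in> {c - b..c - a}"
    then show "y \<in> (\<lambda>x. c - x) ` {a..b}" by (intro image_eqI[of _ _ "c - y"]) auto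
  qed
qed auto

lemma ivl_conv: "{a..b::int} = {a - 1<..b}" by auto

lemma Rset_E:
  assumes L: "l \<in> Lambda r d"
  shows "Rset r d l i = {Ee r d l (i-1)<..Ee r d l i} \<and> Ee r d l (i-1) \<le> Ee r d l i"
proof -
  let ?N = "2 * int r + 2" and ?D = "DD d"
  define q where "q = i div ?N"
  define m where "m = i mod ?N"
  have len: "length l = r + 2" and s: "sum_list l = d" using L by (auto simp: Lambda_def)
  have N: "?N > 0" by simp
  have m0: "0 \<le> m" "m < ?N" using N by (auto simp: m_def)
  have D: "?D = 2 * int d + 2" by (simp add: DD_def)
  have Ei: "Ee r d l i = q * ?D + Eb r d l m" by (simp add: Ee_def q_def m_def)
  have lr: "lam0 l r = int d - int (l ! (r+1))" using lam0_r[OF L] .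
  have l00: "lam0 l 0 = int (l ! 0)" using lam0_0[of l] len by simp
  have R: "Rset r d l i = (if m \<le> int r + 1 then (\<lambda>x. x + q * ?D) ` Rbase r d l (nat m)
             else (\<lambda>x. (q + 1) * ?D - x) ` Rbase r d l (nat (?N - m)))"
    by (simp add: Rset_def Let_def q_def m_def)
  have key: "Rset r d l i = {lo..hi} \<Longrightarrow> lo - 1 = Ee r d l (i-1) \<Longrightarrow> hi = Ee r d l i \<Longrightarrow> lo \<le> hi + 1
     \<Longrightarrow> ?thesis" for lo hi using ivl_conv[of lo hi] by simp
  consider (A) "m = 0" | (B) "1 \<le> m \<and> m \<le> int r" | (C) "m = int r + 1" | (E) "int r + 2 \<le> m"
    using m0 by linarith
  then show ?thesis
  proof cases
    case A
    have p: "(i-1) div ?N = q - 1" "(i-1) mod ?N = ?N - 1" using divmod_prev(1)[OF N, of i] A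
      by (auto simp: q_def m_def)
    have eb: "Eb r d l (?N - 1) = ?D - 1 - int (l ! 0)"
    proof (cases "r = 0")
      case True
      have "lam0 l 0 = int d - int (l ! 1)" using lr True by simp
      then show ?thesis using True l00 D by (simp add: Eb_def)
    next
      case False
      then show ?thesis using l00 by (simp add: Eb_def)
    qed
    have e1: "Ee r d l (i-1) = q * ?D - 1 - int (l ! 0)"
      unfolding Ee_def p eb by (simp add: algebra_simps)
    have rs: "Rset r d l i = {q * ?D - int (l!0) .. q * ?D + int (l!0)}"
      using R A img_add by (simp add: Rbase_def add.commute)
    have ei: "Ee r d l i = q * ?D + int (l!0)" using Ei A l00 by (simp add: Eb_def)
    show ?thesis by (rule key[OF rs]) (use e1 ei in \<open>simp_all add: algebra_simps\<close>)
  next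
    case B
    have p: "(i-1) div ?N = q" "(i-1) mod ?N = m - 1" using divmod_prev(2)[OF N, of i] B
      by (auto simp: q_def m_def)
    have nm: "nat (m - 1) = nat m - 1" "nat m \<noteq> 0" "nat m \<le> r" using B by auto
    have e1: "Ee r d l (i-1) = q * ?D + lam0 l (nat m - 1)"
      using p B nm by (simp add: Ee_def Eb_def)
    have rs: "Rset r d l i = {lam0 l (nat m - 1) + 1 + q * ?D .. lam0 l (nat m) + q * ?D}"
      using R B nm img_add by (simp add: Rbase_def)
    have ei: "Ee r d l i = q * ?D + lam0 l (nat m)" using Ei B by (simp add: Eb_def)
    have "lam0 l (nat m - 1) \<le> lam0 l (nat m)" by (rule lam0_mono) simp
    then show ?thesis by (rule_tac key[OF rs]) (use e1 ei in \<open>simp_all add: algebra_simps\<close>)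
  next
    case C
    have p: "(i-1) div ?N = q" "(i-1) mod ?N = m - 1" using divmod_prev(2)[OF N, of i] C
      by (auto simp: q_def m_def)
    have e1: "Ee r d l (i-1) = q * ?D + int d - int (l!(r+1))"
      using p C lr by (simp add: Ee_def Eb_def)
    have nm: "nat m = r + 1" using C by simp
    have rs: "Rset r d l i = {int d + 1 - int (l!(r+1)) + q * ?D .. int d + 1 + int (l!(r+1)) + q * ?D}"
      using R C nm img_add by (simp add: Rbase_def)
    have ei: "Ee r d l i = q * ?D + int d + 1 + int (l!(r+1))" using Ei C by (simp add: Eb_def)
    show ?thesis by (rule key[OF rs]) (use e1 ei in \<open>simp_all add: algebra_simps\<close>)
  next
    case E
    have p: "(i-1) div ?N = q" "(i-1) mod ?N = m - 1" using divmod_prev(2)[OF N, of i] E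
      by (auto simp: q_def m_def)
    define j where "j = nat (?N - m)"
    have j: "1 \<le> j" "j \<le> r" "int j = ?N - m" using E m0 by (auto simp: j_def)
    have nj: "nat (2 * int r + 1 - m) = j - 1" using j by simp
    have "Rset r d l i = (\<lambda>x. (q + 1) * ?D - x) ` {lam0 l (j - 1) + 1 .. lam0 l j}"
      using R E j by (simp add: Rbase_def j_def)
    also have "\<dots> = {(q + 1) * ?D - lam0 l j .. (q+1) * ?D - lam0 l (j - 1) - 1}"
      by (simp add: img_sub)
    finally have rs: "Rset r d l i = {(q + 1) * ?D - lam0 l j .. (q+1) * ?D - lam0 l (j - 1) - 1}" .
    have ei: "Ee r d l i = q * ?D + ?D - 1 - lam0 l (j - 1)" using Ei E nj by (simp add: Eb_def)
    have e1: "Ee r d l (i-1) = (q + 1) * ?D - lam0 l j - 1"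
    proof (cases "m = int r + 2")
      case True
      then have "j = r" using j by simp
      then show ?thesis using p True lr D by (simp add: Ee_def Eb_def algebra_simps)
    next
      case False
      have "nat (2 * int r + 1 - (m - 1)) = j" using j by simp
      then have "Eb r d l (m - 1) = ?D - 1 - lam0 l j" using False E by (simp add: Eb_def)
      then show ?thesis unfolding Ee_def p by (simp add: algebra_simps)
    qed
    have "lam0 l (j - 1) \<le> lam0 l j" by (rule lam0_mono) simp
    then show ?thesis by (rule_tac key[OF rs]) (use e1 ei in \<open>simp_all add: algebra_simps\<close>)
  qed
qed



lemma idx_exists:
  fixes E :: "int \<Rightarrow> int"
  assumes m: "\<And>i. E (i - 1) \<le> E i" and a: "E a < z" and b: "z \<le> E (a + int k)"
  shows "\<exists>x. E (x - 1) < z \<and> z \<le> E x"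
  using b
proof (induction k)
  case 0 then show ?case using a by simp
next
  case (Suc k)
  show ?case
  proof (cases "z \<le> E (a + int k)")
    case True then show ?thesis using Suc.IH by blast
  next
    case False
    then show ?thesis using Suc.prems by (intro exI[of _ "a + int (Suc k)"]) simp
  qed
qed

context
  fixes r d :: nat and l :: "nat list"
  assumes L: "l \<in> Lambda r d"
begin

lemma Ee_mono1: "Ee r d l (i - 1) \<le> Ee r d l i" using Rset_E[OF L] by blast
lemma Rset_iv: "Rset r d l i = {Ee r d l (i-1)<..Ee r d l i}" using Rset_E[OF L] by blast

lemma Ee_mono: "i \<le> j \<Longrightarrow> Ee r d l i \<le> Ee r d l j"
proof (induction j rule: int_ge_induct)
  case base then show ?case by simp
next
  case (step j) then show ?case using Ee_mono1[of "j+1"] by simp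
qed

lemma Ee_mult: "Ee r d l (k * (2 * int r + 2)) = k * DD d + lam0 l 0"
  by (simp add: Ee_def Eb_def)

lemma lam00_le: "0 \<le> lam0 l 0 \<and> lam0 l 0 \<le> int d"
  using lam0_mono[of 0 r l] lam0_r[OF L] by (simp add: lam0_def)

lemma idx: "\<exists>x. Ee r d l (x - 1) < z \<and> z \<le> Ee r d l x"
proof -
  let ?N = "2 * int r + 2"
  define k1 where "k1 = - (\<bar>z\<bar> + int d + 1)"
  define k2 where "k2 = \<bar>z\<bar>"
  have D: "DD d \<ge> 1" by (simp add: DD_def)
  have "k1 < 0" by (simp add: k1_def)
  then have "k1 * DD d \<le> k1 * 1" using D by (intro mult_left_mono_neg) auto
  moreover have "Ee r d l (k1 * ?N) = k1 * DD d + lam0 l 0" by (rule Ee_mult)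
  moreover have "- z \<le> \<bar>z\<bar>" by simp
  ultimately have a: "Ee r d l (k1 * ?N) < z" using lam00_le k1_def by linarith
  have "k2 * 1 \<le> k2 * DD d" using D by (intro mult_left_mono) (auto simp: k2_def)
  moreover have "Ee r d l (k2 * ?N) = k2 * DD d + lam0 l 0" by (rule Ee_mult)
  moreover have "z \<le> \<bar>z\<bar>" by simp
  ultimately have b0: "z \<le> Ee r d l (k2 * ?N)" using lam00_le k2_def by linarith
  have "k1 * ?N \<le> k2 * ?N" by (simp add: k1_def k2_def)
  then have "k2 * ?N = k1 * ?N + int (nat (k2 * ?N - k1 * ?N))" by simp
  then have b: "z \<le> Ee r d l (k1 * ?N + int (nat (k2 * ?N - k1 * ?N)))" using b0 by metis
  show ?thesis using idx_exists[of "Ee r d l", OF Ee_mono1 a b] .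
qed

lemma R_disj: "i \<noteq> j \<Longrightarrow> Rset r d l i \<inter> Rset r d l j = {}"
proof -
  have "Rset r d l i \<inter> Rset r d l j = {}" if "i < j" for i j
    using Ee_mono[of i "j - 1"] that by (auto simp: Rset_iv)
  then show "i \<noteq> j \<Longrightarrow> ?thesis" by (metis inf_commute linorder_neqE)
qed

lemma R_mem: "\<exists>x. z \<in> Rset r d l x" using idx by (auto simp: Rset_iv)


lemma R_UNIV: "(\<Union>x. Rset r d l x) = UNIV" using R_mem by blast

lemma R_le: "(\<Union>x\<in>{..i}. Rset r d l x) = {..Ee r d l i}"
proof
  show "(\<Union>x\<in>{..i}. Rset r d l x) \<subseteq> {..Ee r d l i}"
    using Ee_mono by (fastforce simp: Rset_iv)
  show "{..Ee r d l i} \<subseteq> (\<Union>x\<in>{..i}. Rset r d l x)"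
  proof
    fix z assume z: "z \<in> {..Ee r d l i}"
    obtain x where x: "Ee r d l (x - 1) < z" "z \<le> Ee r d l x" using idx by blast
    have "x \<le> i"
    proof (rule ccontr)
      assume "\<not> x \<le> i"
      then have "Ee r d l i \<le> Ee r d l (x - 1)" using Ee_mono by simp
      then show False using x z by simp
    qed
    then show "z \<in> (\<Union>x\<in>{..i}. Rset r d l x)" using x by (auto simp: Rset_iv)
  qed
qed

lemma R_ge: "(\<Union>x\<in>{j..}. Rset r d l x) = {Ee r d l (j-1)<..}"
proof
  show "(\<Union>x\<in>{j..}. Rset r d l x) \<subseteq> {Ee r d l (j-1)<..}"
  proof
    fix z assume "z \<in> (\<Union>x\<in>{j..}. Rset r d l x)"
    then obtain x where "j \<le> x" "z \<in> Rset r d l x" by auto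
    then show "z \<in> {Ee r d l (j-1)<..}" using Ee_mono[of "j - 1" "x - 1"] by (auto simp: Rset_iv)
  qed
  show "{Ee r d l (j-1)<..} \<subseteq> (\<Union>x\<in>{j..}. Rset r d l x)"
  proof
    fix z assume z: "z \<in> {Ee r d l (j-1)<..}"
    obtain x where x: "Ee r d l (x - 1) < z" "z \<le> Ee r d l x" using idx by blast
    have "j \<le> x"
    proof (rule ccontr)
      assume "\<not> j \<le> x"
      then have "Ee r d l x \<le> Ee r d l (j - 1)" using Ee_mono by simp
      then show False using x z by simp
    qed
    then show "z \<in> (\<Union>x\<in>{j..}. Rset r d l x)" using x by (auto simp: Rset_iv)
  qed
qed

lemma R_fin: "finite (Rset r d l i)" by (simp add: Rset_iv)

lemma R0: "Rset r d l 0 = {- int (l!0) .. int (l!0)}"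
  by (simp add: Rset_def Rbase_def)

lemma Rr1: "Rset r d l (int r + 1) = {int d + 1 - int (l!(r+1)) .. int d + 1 + int (l!(r+1))}"
proof -
  have "(int r + 1) mod (2 * int r + 2) = int r + 1" by simp
  moreover have "(int r + 1) div (2 * int r + 2) = 0" by simp
  ultimately show ?thesis by (simp add: Rset_def Rbase_def Let_def)
qed

lemma Ee0: "Ee r d l 0 = int (l!0)"
proof -
  have "l \<noteq> []" using L by (auto simp: Lambda_def)
  then show ?thesis using lam0_0[of l] by (simp add: Ee_def Eb_def)
qed

lemma Eer: "Ee r d l (int r) = int d - int (l!(r+1))"
  using lam0_r[OF L] by (simp add: Ee_def Eb_def)

end

lemma fsum_card:
  assumes disj: "\<And>p p'. p \<in> P \<Longrightarrow> p' \<in> P \<Longrightarrow> p \<noteq> p' \<Longrightarrow> H p \<inter> H p' = {}"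
    and fin: "finite (\<Union>p\<in>P. H p)"
  shows "fsum (\<lambda>p. int (card (H p))) P = int (card (\<Union>p\<in>P. H p))"
proof -
  define Q where "Q = {p \<in> P. int (card (H p)) \<noteq> 0}"
  have finH: "p \<in> P \<Longrightarrow> finite (H p)" for p using fin by (meson UN_I finite_subset subsetI)
  have Qe: "Q = {p \<in> P. H p \<noteq> {}}" using finH by (auto simp: Q_def card_eq_0_iff)
  define f where "f p = (SOME x. x \<in> H p)" for p
  have fH: "p \<in> Q \<Longrightarrow> f p \<in> H p" for p unfolding f_def Qe by (auto intro: someI_ex)
  have inj: "inj_on f Q"
  proof (rule inj_onI)
    fix p p' assume a: "p \<in> Q" "p' \<in> Q" "f p = f p'"
    show "p = p'"
    proof (rule ccontr)
      assume "p \<noteq> p'"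
      then have "H p \<inter> H p' = {}" using disj a by (auto simp: Qe)
      moreover have "f p \<in> H p \<inter> H p'" using fH[OF a(1)] fH[OF a(2)] a(3) by simp
      ultimately show False by blast
    qed
  qed
  have "f ` Q \<subseteq> (\<Union>p\<in>P. H p)" using fH by (auto simp: Qe)
  then have finQ: "finite Q" using inj fin inj_on_finite by blast
  have U: "(\<Union>p\<in>P. H p) = (\<Union>p\<in>Q. H p)" by (auto simp: Qe)
  have "card (\<Union>p\<in>Q. H p) = (\<Sum>p\<in>Q. card (H p))"
    by (rule card_UN_disjoint) (use finQ finH disj in \<open>auto simp: Qe\<close>)
  then show ?thesis unfolding fsum_def Q_def[symmetric] U by simp
qed

lemma W_disp: assumes g: "g \<in> Wgrp d" shows "\<exists>C. \<forall>z. z - C \<le> g z"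
proof -
  let ?D = "DD d"
  define C where "C = (\<Sum>c\<in>{0..<?D}. \<bar>g c - c\<bar>)"
  have "z - C \<le> g z" for z
  proof -
    let ?c = "z mod ?D"
    have c: "?c \<in> {0..<?D}" using DD_pos[of d] by simp
    have "\<bar>g ?c - ?c\<bar> \<le> C" unfolding C_def by (rule member_le_sum) (use c in auto)
    moreover have "g z = g ?c + (z div ?D) * ?D" using W_perm[OF g, of ?c "z div ?D"] by simp
    moreover have "z = ?c + (z div ?D) * ?D" by simp
    ultimately show ?thesis by linarith
  qed
  then show ?thesis by blast
qed

lemma fin_NE: assumes g: "g \<in> Wgrp d" shows "finite ({..a} \<inter> g ` {b<..})"
proof -
  obtain C where C: "\<And>z. z - C \<le> g z" using W_disp[OF g] by blast
  have "{..a} \<inter> g ` {b<..} \<subseteq> g ` {b<..a + C}"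
  proof
    fix y assume "y \<in> {..a} \<inter> g ` {b<..}"
    then obtain z where "y = g z" "b < z" "g z \<le> a" by auto
    then show "y \<in> g ` {b<..a + C}" using C[of z] by auto
  qed
  then show ?thesis by (rule finite_subset) simp
qed



lemma step_card:
  assumes x: "x \<in> Wgrp d" and v: "valid d p q" and xt: "x \<circ> tau d p q \<in> Wgrp d"
    and ni: "\<And>u. tau d p q u < u \<Longrightarrow> x (tau d p q u) < x u"
  shows "card ({..a} \<inter> x ` {b<..}) \<le> card ({..a} \<inter> (x \<circ> tau d p q) ` {b<..})"
proof -
  let ?t = "tau d p q"
  define S1 where "S1 = {z. b < z \<and> x z \<le> a}"
  define S2 where "S2 = {u. b < ?t u \<and> x u \<le> a}"
  have tt: "?t (?t z) = z" for z using tau_inv[OF v] .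
  have e1: "{..a} \<inter> x ` {b<..} = x ` S1" by (auto simp: S1_def)
  have e2: "{..a} \<inter> (x \<circ> ?t) ` {b<..} = x ` S2"
  proof
    show "{..a} \<inter> (x \<circ> ?t) ` {b<..} \<subseteq> x ` S2"
    proof
      fix y assume "y \<in> {..a} \<inter> (x \<circ> ?t) ` {b<..}"
      then obtain z where z: "y = x (?t z)" "b < z" "x (?t z) \<le> a" by auto
      then show "y \<in> x ` S2" unfolding S2_def using tt[of z] by (intro image_eqI[of _ _ "?t z"]) auto
    qed
    show "x ` S2 \<subseteq> {..a} \<inter> (x \<circ> ?t) ` {b<..}"
    proof
      fix y assume "y \<in> x ` S2"
      then obtain u where u: "y = x u" "b < ?t u" "x u \<le> a" by (auto simp: S2_def)
      then show "y \<in> {..a} \<inter> (x \<circ> ?t) ` {b<..}" using tt[of u] by (auto intro!: image_eqI[of _ _ "?t u"])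
    qed
  qed
  have ix: "inj x" using W_inj[OF x] .
  have "finite (x ` S2)" using fin_NE[OF xt, of a b] e2 by simp
  then have fin2: "finite S2" using ix by (simp add: finite_image_iff inj_on_subset)
  define f where "f z = (if b < ?t z then z else ?t z)" for z
  have "card S1 \<le> card S2"
  proof (rule card_inj_on_le)
    show "inj_on f S1"
    proof (rule inj_onI)
      fix z1 z2 assume z: "z1 \<in> S1" "z2 \<in> S1" "f z1 = f z2"
      show "z1 = z2"
      proof (cases "b < ?t z1"; cases "b < ?t z2")
        assume "b < ?t z1" "b < ?t z2" then show ?thesis using z by (simp add: f_def)
      next
        assume "\<not> b < ?t z1" "\<not> b < ?t z2"
        then have "?t z1 = ?t z2" using z(3) by (simp add: f_def)
        then show ?thesis by (metis tt)
      next
        assume a1: "b < ?t z1" "\<not> b < ?t z2"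
        then have "z1 = ?t z2" using z by (simp add: f_def)
        have "b < z1" using z(1) by (simp add: S1_def)
        then show ?thesis using a1 \<open>z1 = ?t z2\<close> by simp
      next
        assume a1: "\<not> b < ?t z1" "b < ?t z2"
        then have "?t z1 = z2" using z by (simp add: f_def)
        have "b < z2" using z(2) by (simp add: S1_def)
        then show ?thesis using a1 \<open>?t z1 = z2\<close> by simp
      qed
    qed
    show "f ` S1 \<subseteq> S2"
    proof
      fix y assume "y \<in> f ` S1"
      then obtain z where z: "z \<in> S1" "y = f z" by auto
      show "y \<in> S2"
      proof (cases "b < ?t z")
        case True then show ?thesis using z by (simp add: f_def S1_def S2_def)
      next
        case False
        then have "?t z < z" using z by (simp add: S1_def)
        then have "x (?t z) < x z" using ni by blast
        then show ?thesis using z False tt[of z] by (simp add: f_def S1_def S2_def)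
      qed
    qed
    show "finite S2" by (rule fin2)
  qed
  moreover have "card (x ` S1) = card S1" using ix by (simp add: card_image inj_on_subset)
  moreover have "card (x ` S2) = card S2" using ix by (simp add: card_image inj_on_subset)
  ultimately show ?thesis using e1 e2 by simp
qed

lemma bruhat_card:
  assumes d: "2 \<le> d" and br: "bruhat_le d h g"
  shows "card ({..a} \<inter> h ` {b<..}) \<le> card ({..a} \<inter> g ` {b<..})"
proof -
  have hW: "h \<in> Wgrp d" and ch: "(h, g) \<in> (bruhat_step d)\<^sup>*" using br by (auto simp: bruhat_le_def)
  have "g \<in> Wgrp d \<and> card ({..a} \<inter> h ` {b<..}) \<le> card ({..a} \<inter> g ` {b<..})"
    using ch
  proof (induction rule: rtrancl_induct)
    case base then show ?case using hW by simp
  next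
    case (step y z)
    obtain x t where xt: "y = x" "z = x \<circ> t" "x \<in> Wgrp d" "t \<in> reflections d" "wlen d x < wlen d (x \<circ> t)"
      using step.hyps(2) unfolding bruhat_step_def by blast
    obtain p q where pq: "valid d p q" "t = tau d p q" using refl_tau[OF d xt(4)] by blast
    have zW: "x \<circ> tau d p q \<in> Wgrp d" using W_comp[OF xt(3) tau_W[OF pq(1)]] .
    have ni: "\<And>u. tau d p q u < u \<Longrightarrow> x (tau d p q u) < x u"
      using step_NI[OF d xt(3) pq(1)] xt(5) pq(2) by blast
    have c2: "card ({..a} \<inter> x ` {b<..}) \<le> card ({..a} \<inter> (x \<circ> tau d p q) ` {b<..})"
      using step_card[OF xt(3) pq(1) zW ni] .
    have c1: "card ({..a} \<inter> h ` {b<..}) \<le> card ({..a} \<inter> x ` {b<..})" using step.IH xt(1) by simp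
    show ?case unfolding xt(2) pq(2) by (intro conjI zW) (rule le_trans[OF c1 c2])
  qed
  then show ?thesis by blast
qed


section \<open>Matrix computations\<close>

lemma kappa_H: "kappa r d lam g mu i j = int (card (Rset r d lam i \<inter> g ` Rset r d mu j))"
  by (simp add: kappa_def)

context
  fixes r d :: nat and lam mu :: "nat list" and g :: "int \<Rightarrow> int"
  assumes Ll: "lam \<in> Lambda r d" and Lm: "mu \<in> Lambda r d" and g: "g \<in> Wgrp d"
begin

lemma ginj: "inj g" using W_inj[OF g] .

lemma row_fsum: "fsum (\<lambda>j. kappa r d lam g mu i j) S
   = int (card (Rset r d lam i \<inter> g ` (\<Union>j\<in>S. Rset r d mu j)))"
proof -
  let ?H = "\<lambda>j. Rset r d lam i \<inter> g ` Rset r d mu j"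
  have "fsum (\<lambda>j. int (card (?H j))) S = int (card (\<Union>j\<in>S. ?H j))"
  proof (rule fsum_card)
    fix p p' :: int assume "p \<noteq> p'"
    then have "Rset r d mu p \<inter> Rset r d mu p' = {}" using R_disj[OF Lm] by blast
    then have "g ` Rset r d mu p \<inter> g ` Rset r d mu p' = {}" using ginj by (simp add: image_Int[symmetric])
    then show "?H p \<inter> ?H p' = {}" by blast
  next
    show "finite (\<Union>j\<in>S. ?H j)" using R_fin[OF Ll, of i] by (rule finite_subset[rotated]) auto
  qed
  moreover have "(\<Union>j\<in>S. ?H j) = Rset r d lam i \<inter> g ` (\<Union>j\<in>S. Rset r d mu j)" by blast
  ultimately show ?thesis by (simp add: kappa_def)
qed

lemma col_fsum: "fsum (\<lambda>i. kappa r d lam g mu i j) S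
   = int (card ((\<Union>i\<in>S. Rset r d lam i) \<inter> g ` Rset r d mu j))"
proof -
  let ?H = "\<lambda>i. Rset r d lam i \<inter> g ` Rset r d mu j"
  have "fsum (\<lambda>i. int (card (?H i))) S = int (card (\<Union>i\<in>S. ?H i))"
  proof (rule fsum_card)
    fix p p' :: int assume "p \<noteq> p'"
    then have "Rset r d lam p \<inter> Rset r d lam p' = {}" using R_disj[OF Ll] by blast
    then show "?H p \<inter> ?H p' = {}" by blast
  next
    show "finite (\<Union>i\<in>S. ?H i)" using R_fin[OF Lm, of j] by (rule_tac finite_subset[of _ "g ` Rset r d mu j"]) auto
  qed
  moreover have "(\<Union>i\<in>S. ?H i) = (\<Union>i\<in>S. Rset r d lam i) \<inter> g ` Rset r d mu j" by blast
  ultimately show ?thesis by (simp add: kappa_def)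
qed

lemma sig_card: "sigma (kappa r d lam g mu) i j
   = int (card ({..Ee r d lam i} \<inter> g ` {Ee r d mu (j-1)<..}))"
proof -
  let ?H = "\<lambda>p. Rset r d lam (fst p) \<inter> g ` Rset r d mu (snd p)"
  let ?P = "{(x, y). x \<le> i \<and> j \<le> y}"
  have f: "(\<lambda>(x, y). kappa r d lam g mu x y) = (\<lambda>p. int (card (?H p)))"
    by (auto simp: kappa_def)
  have U: "(\<Union>p\<in>?P. ?H p) = (\<Union>x\<in>{..i}. Rset r d lam x) \<inter> g ` (\<Union>y\<in>{j..}. Rset r d mu y)"
  proof (rule set_eqI, rule iffI)
    fix z assume "z \<in> (\<Union>p\<in>?P. ?H p)"
    then obtain x y where "x \<le> i" "j \<le> y" "z \<in> Rset r d lam x" "z \<in> g ` Rset r d mu y" by auto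
    then show "z \<in> (\<Union>x\<in>{..i}. Rset r d lam x) \<inter> g ` (\<Union>y\<in>{j..}. Rset r d mu y)" by blast
  next
    fix z assume "z \<in> (\<Union>x\<in>{..i}. Rset r d lam x) \<inter> g ` (\<Union>y\<in>{j..}. Rset r d mu y)"
    then obtain x y where "x \<le> i" "j \<le> y" "z \<in> Rset r d lam x" "z \<in> g ` Rset r d mu y" by blast
    then have "(x, y) \<in> ?P" "z \<in> ?H (x, y)" by auto
    then show "z \<in> (\<Union>p\<in>?P. ?H p)" by blast
  qed
  have U2: "(\<Union>p\<in>?P. ?H p) = {..Ee r d lam i} \<inter> g ` {Ee r d mu (j-1)<..}"
    unfolding U R_le[OF Ll] R_ge[OF Lm] ..
  have "fsum (\<lambda>p. int (card (?H p))) ?P = int (card (\<Union>p\<in>?P. ?H p))"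
  proof (rule fsum_card)
    fix p p' :: "int \<times> int" assume ne: "p \<noteq> p'"
    show "?H p \<inter> ?H p' = {}"
    proof (cases "fst p = fst p'")
      case True
      then have "snd p \<noteq> snd p'" using ne by (simp add: prod_eq_iff)
      then have "Rset r d mu (snd p) \<inter> Rset r d mu (snd p') = {}" using R_disj[OF Lm] by blast
      then have "g ` Rset r d mu (snd p) \<inter> g ` Rset r d mu (snd p') = {}" using ginj by (simp add: image_Int[symmetric])
      then show ?thesis by blast
    next
      case False
      then have "Rset r d lam (fst p) \<inter> Rset r d lam (fst p') = {}" using R_disj[OF Ll] by blast
      then show ?thesis by blast
    qed
  next
    show "finite (\<Union>p\<in>?P. ?H p)" unfolding U2 using fin_NE[OF g] .
  qed
  then show ?thesis unfolding sigma_def f U2 .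
qed

end


lemma sym_card:
  fixes \<phi> :: "int \<Rightarrow> int"
  assumes fin: "finite Y" and inv: "\<And>y. \<phi> (\<phi> y) = y" and cl: "\<And>y. y \<in> Y \<Longrightarrow> \<phi> y \<in> Y"
    and b: "bij g" and com: "\<And>z. g (\<phi> z) = \<phi> (g z)"
    and d1: "A0 \<inter> A1 = {}" and d2: "A0 \<inter> \<phi> ` A1 = {}" and d3: "A1 \<inter> \<phi> ` A1 = {}"
    and u: "A0 \<union> A1 \<union> \<phi> ` A1 = UNIV"
  shows "card Y = card (Y \<inter> g ` A0) + 2 * card (Y \<inter> g ` A1)"
proof -
  have ig: "inj g" and sg: "surj g" using b by (auto simp: bij_def)
  have ip: "inj \<phi>" by (metis inv injI)
  have gp: "g \<circ> \<phi> = \<phi> \<circ> g" using com by auto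
  have P': "g ` (\<phi> ` A1) = \<phi> ` (g ` A1)" by (simp add: image_comp gp)
  have e: "Y = (Y \<inter> g ` A0) \<union> (Y \<inter> g ` A1) \<union> (Y \<inter> g ` (\<phi> ` A1))"
  proof -
    have "g ` (A0 \<union> A1 \<union> \<phi> ` A1) = UNIV" using u sg by simp
    then have "g ` A0 \<union> g ` A1 \<union> g ` (\<phi> ` A1) = UNIV" by (simp only: image_Un)
    then have "Y = Y \<inter> (g ` A0 \<union> g ` A1 \<union> g ` (\<phi> ` A1))" by simp
    then show ?thesis by (simp only: Int_Un_distrib)
  qed
  have i1: "g ` A0 \<inter> g ` A1 = {}" using d1 ig by (simp add: image_Int[symmetric])
  have i2: "g ` A0 \<inter> g ` (\<phi> ` A1) = {}" using d2 ig by (simp add: image_Int[symmetric])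
  have i3: "g ` A1 \<inter> g ` (\<phi> ` A1) = {}" using d3 ig by (simp add: image_Int[symmetric])
  have s3: "Y \<inter> g ` (\<phi> ` A1) = \<phi> ` (Y \<inter> g ` A1)"
  proof
    show "Y \<inter> g ` (\<phi> ` A1) \<subseteq> \<phi> ` (Y \<inter> g ` A1)"
    proof
      fix z assume "z \<in> Y \<inter> g ` (\<phi> ` A1)"
      then have zY: "z \<in> Y" and "z \<in> \<phi> ` (g ` A1)" using P' by auto
      then obtain w where w: "w \<in> g ` A1" "z = \<phi> w" by blast
      have "\<phi> z = w" using w inv by simp
      then have "\<phi> z \<in> Y \<inter> g ` A1" using cl[OF zY] w by simp
      moreover have "z = \<phi> (\<phi> z)" using inv by simp
      ultimately show "z \<in> \<phi> ` (Y \<inter> g ` A1)" by (rule rev_image_eqI)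
    qed
    show "\<phi> ` (Y \<inter> g ` A1) \<subseteq> Y \<inter> g ` (\<phi> ` A1)"
    proof
      fix z assume "z \<in> \<phi> ` (Y \<inter> g ` A1)"
      then obtain y where y: "y \<in> Y" "y \<in> g ` A1" "z = \<phi> y" by blast
      then have "z \<in> Y" using cl by simp
      moreover have "z \<in> \<phi> ` (g ` A1)" using y by blast
      ultimately show "z \<in> Y \<inter> g ` (\<phi> ` A1)" using P' by simp
    qed
  qed
  have c3: "card (Y \<inter> g ` (\<phi> ` A1)) = card (Y \<inter> g ` A1)"
    unfolding s3 using ip by (simp add: card_image inj_on_subset)
  let ?X0 = "Y \<inter> g ` A0" and ?X1 = "Y \<inter> g ` A1" and ?X2 = "Y \<inter> g ` (\<phi> ` A1)"
  have f0: "finite ?X0" "finite ?X1" "finite ?X2" using fin by auto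
  have "card Y = card ((?X0 \<union> ?X1) \<union> ?X2)" using e by (rule arg_cong)
  also have "\<dots> = card (?X0 \<union> ?X1) + card ?X2"
    by (rule card_Un_disjoint) (use f0 i2 i3 in blast)+
  also have "card (?X0 \<union> ?X1) = card ?X0 + card ?X1"
    by (rule card_Un_disjoint) (use f0 i1 in blast)+
  finally show ?thesis using c3 by simp
qed

lemma half_arith: "(c::int) = a + 2 * b \<Longrightarrow> (a - 1) div 2 + b = (c - 1) div 2"
proof -
  assume "c = a + 2 * b"
  then have "c - 1 = (a - 1) + b * 2" by simp
  then show ?thesis by simp
qed



lemma img_neg_gt: "uminus ` {m<..} = {..<-(m::int)}"
proof
  show "{..<-m} \<subseteq> uminus ` {m<..}"
  proof
    fix z assume "z \<in> {..<-m}" then show "z \<in> uminus ` {m<..}" by (intro image_eqI[of _ _ "-z"]) auto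
  qed
qed auto

lemma img_refl_le: "(\<lambda>z. c - z) ` {..a} = {c - (a::int)..}"
proof
  show "{c - a..} \<subseteq> (\<lambda>z. c - z) ` {..a}"
  proof
    fix z assume "z \<in> {c - a..}" then show "z \<in> (\<lambda>z. c - z) ` {..a}" by (intro image_eqI[of _ _ "c - z"]) auto
  qed
qed auto

definition RV :: "nat \<Rightarrow> nat \<Rightarrow> nat list \<Rightarrow> nat \<Rightarrow> int" where
  "RV r d l i = (if i = 0 then (int (card (Rset r d l 0)) - 1) div 2
      else if i \<le> r then int (card (Rset r d l (int i)))
      else (int (card (Rset r d l (int r + 1))) - 1) div 2)"

context
  fixes r d :: nat and lam mu :: "nat list" and g :: "int \<Rightarrow> int"
  assumes Ll: "lam \<in> Lambda r d" and Lm: "mu \<in> Lambda r d" and g: "g \<in> Wgrp d"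
begin

lemma gbij: "bij g" using W_bij[OF g] .
lemma gsurj: "surj g" using gbij by (simp add: bij_def)
lemma ginj': "inj g" using gbij by (simp add: bij_def)

lemma row0: "(kappa r d lam g mu 0 0 - 1) div 2 + fsum (\<lambda>j. kappa r d lam g mu 0 j) {1..}
   = (int (card (Rset r d lam 0)) - 1) div 2"
proof -
  let ?Y = "Rset r d lam 0" and ?A0 = "Rset r d mu 0" and ?A1 = "{int (mu!0)<..}"
  have f: "fsum (\<lambda>j. kappa r d lam g mu 0 j) {1..} = int (card (?Y \<inter> g ` ?A1))"
    using row_fsum[OF Ll Lm g, of 0 "{1..}"] R_ge[OF Lm, of 1] Ee0[OF Lm] by simp
  have k: "kappa r d lam g mu 0 0 = int (card (?Y \<inter> g ` ?A0))" by (simp add: kappa_def)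
  have A0: "?A0 = {- int (mu!0)..int (mu!0)}" using R0[OF Lm] .
  have Y: "?Y = {- int (lam!0)..int (lam!0)}" using R0[OF Ll] .
  have "card ?Y = card (?Y \<inter> g ` ?A0) + 2 * card (?Y \<inter> g ` ?A1)"
  proof (rule sym_card[where \<phi> = uminus])
    show "finite ?Y" using R_fin[OF Ll] .
    show "y \<in> ?Y \<Longrightarrow> - y \<in> ?Y" for y unfolding Y by auto
    show "bij g" by (rule gbij)
    show "g (- z) = - g z" for z using W_odd[OF g] .
  qed (unfold A0 img_neg_gt, auto)
  then show ?thesis using f k half_arith by simp
qed

lemma rowr: "(kappa r d lam g mu (int r + 1) (int r + 1) - 1) div 2 + fsum (\<lambda>j. kappa r d lam g mu (int r + 1) j) {..int r}
   = (int (card (Rset r d lam (int r + 1))) - 1) div 2"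
proof -
  let ?Y = "Rset r d lam (int r + 1)" and ?A0 = "Rset r d mu (int r + 1)" and ?A1 = "{..int d - int (mu!(r+1))}"
  have f: "fsum (\<lambda>j. kappa r d lam g mu (int r + 1) j) {..int r} = int (card (?Y \<inter> g ` ?A1))"
    using row_fsum[OF Ll Lm g, of "int r + 1" "{..int r}"] R_le[OF Lm, of "int r"] Eer[OF Lm] by simp
  have k: "kappa r d lam g mu (int r + 1) (int r + 1) = int (card (?Y \<inter> g ` ?A0))" by (simp add: kappa_def)
  have A0: "?A0 = {int d + 1 - int (mu!(r+1))..int d + 1 + int (mu!(r+1))}" using Rr1[OF Lm] .
  have Y: "?Y = {int d + 1 - int (lam!(r+1))..int d + 1 + int (lam!(r+1))}" using Rr1[OF Ll] .
  have D: "DD d = 2 * int d + 2" by (simp add: DD_def)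
  have "card ?Y = card (?Y \<inter> g ` ?A0) + 2 * card (?Y \<inter> g ` ?A1)"
  proof (rule sym_card[where \<phi> = "\<lambda>z. DD d - z"])
    show "finite ?Y" using R_fin[OF Ll] .
    show "y \<in> ?Y \<Longrightarrow> DD d - y \<in> ?Y" for y unfolding Y D by auto
    show "bij g" by (rule gbij)
    show "g (DD d - z) = DD d - g z" for z using W_refl[OF g] .
  qed (unfold A0 img_refl_le D, auto)
  then show ?thesis using f k half_arith by simp
qed

lemma col0: "(kappa r d lam g mu 0 0 - 1) div 2 + fsum (\<lambda>i. kappa r d lam g mu i 0) {1..}
   = (int (card (Rset r d mu 0)) - 1) div 2"
proof -
  let ?Y = "g ` Rset r d mu 0" and ?A0 = "Rset r d lam 0" and ?A1 = "{int (lam!0)<..}"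
  have f: "fsum (\<lambda>i. kappa r d lam g mu i 0) {1..} = int (card (?Y \<inter> id ` ?A1))"
    using col_fsum[OF Ll Lm g, of 0 "{1..}"] R_ge[OF Ll, of 1] Ee0[OF Ll] by (simp add: Int_commute)
  have k: "kappa r d lam g mu 0 0 = int (card (?Y \<inter> id ` ?A0))" by (simp add: kappa_def Int_commute)
  have A0: "?A0 = {- int (lam!0)..int (lam!0)}" using R0[OF Ll] .
  have M: "Rset r d mu 0 = {- int (mu!0)..int (mu!0)}" using R0[OF Lm] .
  have cY: "card ?Y = card (Rset r d mu 0)" using ginj' by (simp add: card_image inj_on_subset)
  have "card ?Y = card (?Y \<inter> id ` ?A0) + 2 * card (?Y \<inter> id ` ?A1)"
  proof (rule sym_card[where \<phi> = uminus])
    show "finite ?Y" using R_fin[OF Lm] by simp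
    show "y \<in> ?Y \<Longrightarrow> - y \<in> ?Y" for y unfolding M using W_odd[OF g]
      by (auto intro!: image_eqI[of _ g "- x" for x])
    show "bij (id :: int \<Rightarrow> int)" by simp
  qed (unfold A0 img_neg_gt, auto)
  then show ?thesis using f k cY half_arith by simp
qed

lemma colr: "(kappa r d lam g mu (int r + 1) (int r + 1) - 1) div 2 + fsum (\<lambda>i. kappa r d lam g mu i (int r + 1)) {..int r}
   = (int (card (Rset r d mu (int r + 1))) - 1) div 2"
proof -
  let ?Y = "g ` Rset r d mu (int r + 1)" and ?A0 = "Rset r d lam (int r + 1)" and ?A1 = "{..int d - int (lam!(r+1))}"
  have f: "fsum (\<lambda>i. kappa r d lam g mu i (int r + 1)) {..int r} = int (card (?Y \<inter> id ` ?A1))"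
    using col_fsum[OF Ll Lm g, of "int r + 1" "{..int r}"] R_le[OF Ll, of "int r"] Eer[OF Ll] by (simp add: Int_commute)
  have k: "kappa r d lam g mu (int r + 1) (int r + 1) = int (card (?Y \<inter> id ` ?A0))" by (simp add: kappa_def Int_commute)
  have A0: "?A0 = {int d + 1 - int (lam!(r+1))..int d + 1 + int (lam!(r+1))}" using Rr1[OF Ll] .
  have M: "Rset r d mu (int r + 1) = {int d + 1 - int (mu!(r+1))..int d + 1 + int (mu!(r+1))}" using Rr1[OF Lm] .
  have D: "DD d = 2 * int d + 2" by (simp add: DD_def)
  have cY: "card ?Y = card (Rset r d mu (int r + 1))" using ginj' by (simp add: card_image inj_on_subset)
  have "card ?Y = card (?Y \<inter> id ` ?A0) + 2 * card (?Y \<inter> id ` ?A1)"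
  proof (rule sym_card[where \<phi> = "\<lambda>z. DD d - z"])
    show "finite ?Y" using R_fin[OF Lm] by simp
    show "y \<in> ?Y \<Longrightarrow> DD d - y \<in> ?Y" for y
    proof -
      assume "y \<in> ?Y"
      then obtain x where x: "x \<in> Rset r d mu (int r + 1)" "y = g x" by blast
      have "DD d - x \<in> Rset r d mu (int r + 1)" using x(1) unfolding M D by auto
      moreover have "DD d - y = g (DD d - x)" using W_refl[OF g] x(2) by simp
      ultimately show ?thesis by blast
    qed
    show "bij (id :: int \<Rightarrow> int)" by simp
  qed (unfold A0 img_refl_le D, auto)
  then show ?thesis using f k cY half_arith by simp
qed

lemma rowmid: "fsum (\<lambda>j. kappa r d lam g mu i j) UNIV = int (card (Rset r d lam i))"
  using row_fsum[OF Ll Lm g, of i UNIV] R_UNIV[OF Lm] gsurj by simp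

lemma colmid: "fsum (\<lambda>i. kappa r d lam g mu i j) UNIV = int (card (Rset r d mu j))"
  using col_fsum[OF Ll Lm g, of j UNIV] R_UNIV[OF Ll] ginj' by (simp add: card_image inj_on_subset)

lemma rowc_RV: "rowc r (kappa r d lam g mu) = map (RV r d lam) [0..<r+2]"
  unfolding rowc_def map_eq_conv
proof
  fix i assume "i \<in> set [0..<r+2]"
  then have i: "i < r + 2" by auto
  show "(if i = 0 then (kappa r d lam g mu 0 0 - 1) div 2 + fsum (\<lambda>j. kappa r d lam g mu 0 j) {1..}
        else if i \<le> r then fsum (\<lambda>j. kappa r d lam g mu (int i) j) UNIV
        else (kappa r d lam g mu (int r + 1) (int r + 1) - 1) div 2 + fsum (\<lambda>j. kappa r d lam g mu (int r + 1) j) {..int r})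
      = RV r d lam i"
    using row0 rowr rowmid i by (simp add: RV_def)
qed

lemma colc_RV: "colc r (kappa r d lam g mu) = map (RV r d mu) [0..<r+2]"
  unfolding colc_def map_eq_conv
proof
  fix j assume "j \<in> set [0..<r+2]"
  then have j: "j < r + 2" by auto
  show "(if j = 0 then (kappa r d lam g mu 0 0 - 1) div 2 + fsum (\<lambda>i. kappa r d lam g mu i 0) {1..}
        else if j \<le> r then fsum (\<lambda>i. kappa r d lam g mu i (int j)) UNIV
        else (kappa r d lam g mu (int r + 1) (int r + 1) - 1) div 2 + fsum (\<lambda>i. kappa r d lam g mu i (int r + 1)) {..int r})
      = RV r d mu j"
    using col0 colr colmid j by (simp add: RV_def)
qed

end

theorem lemma5p2p3:
  fixes r d :: nat and lam mu :: "nat list" and g h :: "int \<Rightarrow> int"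
  assumes "2 \<le> d"
    and "lam \<in> Lambda r d" and "mu \<in> Lambda r d"
    and "g \<in> Wgrp d" and "h \<in> Wgrp d"
    and "bruhat_le d h g"
  shows "alg_le r (kappa r d lam h mu) (kappa r d lam g mu)"
proof -
  have r: "rowc r (kappa r d lam h mu) = rowc r (kappa r d lam g mu)"
    using rowc_RV[OF assms(2,3,5)] rowc_RV[OF assms(2,3,4)] by simp
  have c: "colc r (kappa r d lam h mu) = colc r (kappa r d lam g mu)"
    using colc_RV[OF assms(2,3,5)] colc_RV[OF assms(2,3,4)] by simp
  have s: "sigma (kappa r d lam h mu) i j \<le> sigma (kappa r d lam g mu) i j" for i j
    using sig_card[OF assms(2,3,5)] sig_card[OF assms(2,3,4)] bruhat_card[OF assms(1,6)] by simp
  show ?thesis unfolding alg_le_def using r c s by blast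
qed

end
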